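(* Let $X$ be a Dedekind complete Riesz space, $x,y\in X^{s}_{+}$ and $\lambda\in\mathbb{R}_{+}$. Then: (1) $(x+y)^{\infty}=x^{\infty}+y^{\infty}$ and $(\lambda x)^{\infty}=\lambda x^{\infty}$; (2) if $x\le y$ then $x^{\infty}\le y^{\infty}$; (3) $(x\vee y)^{\infty}=x^{\infty}\vee y^{\infty}$ and $(x\wedge y)^{\infty}=x^{\infty}\wedge y^{\infty}$.
   Context: The sup-completion $X^{s}$ of $X$ is the set of classes of nonempty upward directed subsets of $X$ under $A\sim B$ iff $\sup_{a\in A}(x\wedge a)=\sup_{b\in B}(x\wedge b)$ for all $x\in X$, with induced addition, nonnegative scalar multiplication and order; it is a lattice-ordered cone containing $X$ and $X^u_+$ ($X^u$ the universal completion) in which every nonempty subset has a supremum. For a band $B$ of $X$, $\infty_B$ is the supremum of $B$ in $X^s$. Every $x\in X^{s}_{+}$ can be written uniquely as $x=\infty_{B}+u$ with $B$ a band of $X$ and $u\in X^{u}$, $u\perp B$; the infinite part of $x$ is $x^{\infty}:=\infty_{B}$. *)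

theory Defs
  imports Complex_Main
begin

text \<open>Dedekind complete Riesz space: an ordered real vector space which is a lattice in
which every nonempty bounded-above set has a supremum, i.e. a type of class
ordered_real_vector and conditionally_complete_lattice.\<close>

definition rabs :: "'a::{ordered_real_vector, lattice} \<Rightarrow> 'a" where
  "rabs x = sup x (- x)"

definition is_ideal :: "'a::{ordered_real_vector, lattice} set \<Rightarrow> bool" where
  "is_ideal B \<longleftrightarrow> 0 \<in> B \<and> (\<forall>x\<in>B. \<forall>y\<in>B. x + y \<in> B) \<and> (\<forall>c. \<forall>x\<in>B. c *\<^sub>R x \<in> B)
     \<and> (\<forall>x\<in>B. \<forall>y. rabs y \<le> rabs x \<longrightarrow> y \<in> B)"

definition is_band :: "'a::{ordered_real_vector, conditionally_complete_lattice} set \<Rightarrow> bool" where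
  "is_band B \<longleftrightarrow> is_ideal B \<and>
     (\<forall>D. D \<subseteq> B \<and> D \<noteq> {} \<and> bdd_above D \<longrightarrow> Sup D \<in> B)"

subsection \<open>The sup-completion X^s (as a set of equivalence classes)\<close>

definition updir :: "'a::order set \<Rightarrow> bool" where
  "updir A \<longleftrightarrow> A \<noteq> {} \<and> (\<forall>a\<in>A. \<forall>b\<in>A. \<exists>c\<in>A. a \<le> c \<and> b \<le> c)"

definition sc_rel :: "'a::conditionally_complete_lattice set \<Rightarrow> 'a set \<Rightarrow> bool" where
  "sc_rel A B \<longleftrightarrow> (\<forall>x. (SUP a\<in>A. inf x a) = (SUP b\<in>B. inf x b))"

definition sc_class :: "'a::conditionally_complete_lattice set \<Rightarrow> 'a set set" where
  "sc_class A = {B. updir B \<and> sc_rel A B}"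

definition Xs :: "'a::conditionally_complete_lattice set set set" where
  "Xs = {sc_class A | A. updir A}"

definition sc_rep :: "'a::conditionally_complete_lattice set set \<Rightarrow> 'a set" where
  "sc_rep p = (SOME A. A \<in> p)"

definition emb :: "'a::conditionally_complete_lattice \<Rightarrow> 'a set set" where
  "emb x = sc_class {x}"

definition sc_le :: "'a::conditionally_complete_lattice set set \<Rightarrow> 'a set set \<Rightarrow> bool" where
  "sc_le p q \<longleftrightarrow> (\<exists>A B. updir A \<and> updir B \<and> p = sc_class A \<and> q = sc_class B \<and>
       (\<forall>x. (SUP a\<in>A. inf x a) \<le> (SUP b\<in>B. inf x b)))"

definition sc_add :: "'a::{ordered_real_vector, conditionally_complete_lattice} set set
    \<Rightarrow> 'a set set \<Rightarrow> 'a set set" where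
  "sc_add p q = sc_class {a + b | a b. a \<in> sc_rep p \<and> b \<in> sc_rep q}"

definition sc_scale :: "real \<Rightarrow> 'a::{ordered_real_vector, conditionally_complete_lattice} set set
    \<Rightarrow> 'a set set" where
  "sc_scale c p = sc_class ((\<lambda>a. c *\<^sub>R a) ` sc_rep p)"

definition sc_zero :: "'a::{ordered_real_vector, conditionally_complete_lattice} set set" where
  "sc_zero = emb 0"

definition sc_Sup :: "'a::conditionally_complete_lattice set set set \<Rightarrow> 'a set set" where
  "sc_Sup S = (THE z. z \<in> Xs \<and> (\<forall>s\<in>S. sc_le s z) \<and> (\<forall>w\<in>Xs. (\<forall>s\<in>S. sc_le s w) \<longrightarrow> sc_le z w))"

definition sc_Inf :: "'a::conditionally_complete_lattice set set set \<Rightarrow> 'a set set" where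
  "sc_Inf S = (THE z. z \<in> Xs \<and> (\<forall>s\<in>S. sc_le z s) \<and> (\<forall>w\<in>Xs. (\<forall>s\<in>S. sc_le w s) \<longrightarrow> sc_le w z))"

definition sc_sup :: "'a::conditionally_complete_lattice set set \<Rightarrow> 'a set set \<Rightarrow> 'a set set" where
  "sc_sup p q = sc_Sup {p, q}"

definition sc_inf :: "'a::conditionally_complete_lattice set set \<Rightarrow> 'a set set \<Rightarrow> 'a set set" where
  "sc_inf p q = sc_Inf {p, q}"

definition Xs_pos :: "'a::{ordered_real_vector, conditionally_complete_lattice} set set set" where
  "Xs_pos = {p \<in> Xs. sc_le sc_zero p}"

definition infty :: "'a::{ordered_real_vector, conditionally_complete_lattice} set \<Rightarrow> 'a set set" where
  "infty B = sc_Sup (emb ` B)"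

text \<open>Positive elements of the universal completion X^u, viewed inside X^s: the positive elements of X^s dominating no nonzero
  n z (z in X_+) for all n.\<close>
definition Xu_pos :: "'a::{ordered_real_vector, conditionally_complete_lattice} set set set" where
  "Xu_pos = {u \<in> Xs_pos. \<forall>z. 0 \<le> z \<and> (\<forall>n::nat. sc_le (emb (real n *\<^sub>R z)) u) \<longrightarrow> z = 0}"

definition sc_disj_band :: "'a::{ordered_real_vector, conditionally_complete_lattice} set set
    \<Rightarrow> 'a set \<Rightarrow> bool" where
  "sc_disj_band u B \<longleftrightarrow> (\<forall>b\<in>B. sc_inf u (emb (rabs b)) = sc_zero)"

definition inf_part :: "'a::{ordered_real_vector, conditionally_complete_lattice} set set
    \<Rightarrow> 'a set set" where
  "inf_part x = (THE c. \<exists>B u. is_band B \<and> u \<in> Xu_pos \<and> sc_disj_band u B \<and>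
       x = sc_add (infty B) u \<and> c = infty B)"

end

theory Submission
  imports Defs
begin


lemma add_sup_l: "(a::'a::{ordered_ab_group_add,lattice}) + sup b c = sup (a+b) (a+c)"
proof (rule antisym)
  have "sup b c \<le> sup (a+b) (a+c) - a"
    by (metis add.commute add_diff_cancel_left' diff_right_mono sup.cobounded1 sup.cobounded2 sup_least)
  then show "a + sup b c \<le> sup (a+b) (a+c)" by (metis add.commute le_diff_eq)
qed (simp add: add_left_mono)

lemma add_inf_l: "(a::'a::{ordered_ab_group_add,lattice}) + inf b c = inf (a+b) (a+c)"
proof (rule antisym)
  have "inf (a+b) (a+c) - a \<le> inf b c"
    by (metis add.commute add_diff_cancel_left' diff_right_mono inf.cobounded1 inf.cobounded2 inf_greatest)
  then show "inf (a+b) (a+c) \<le> a + inf b c" by (metis add.commute diff_le_eq)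
qed (simp add: add_left_mono)

lemma neg_inf: "- inf (a::'a::{ordered_ab_group_add,lattice}) b = sup (-a) (-b)"
proof (rule antisym)
  have "- sup (-a) (-b) \<le> a" by (metis minus_le_iff sup.cobounded1)
  moreover have "- sup (-a) (-b) \<le> b" by (metis minus_le_iff sup.cobounded2)
  ultimately have "- sup (-a) (-b) \<le> inf a b" by simp
  then show "- inf a b \<le> sup (-a) (-b)" by (metis minus_le_iff)
qed (simp add: sup_least)

lemma inf_plus_sup: "inf (a::'a::{ordered_ab_group_add,lattice}) b + sup a b = a + b"
proof -
  have "a + b - inf a b = a + b + sup (-a) (-b)" by (simp add: neg_inf)
  also have "\<dots> = sup b a" by (simp add: add_sup_l algebra_simps)
  finally show ?thesis by (simp add: algebra_simps sup.commute)
qed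

lemma disj_add_sup: "inf (a::'a::{ordered_ab_group_add,lattice}) b = 0 \<Longrightarrow> a + b = sup a b"
  using inf_plus_sup[of a b] by simp

lemma riesz_ineq:
  fixes w a b :: "'a::{ordered_ab_group_add,lattice}"
  assumes "0 \<le> w" "0 \<le> a" "0 \<le> b"
  shows "inf w (a + b) \<le> inf w a + inf w b"
proof -
  let ?c = "inf w (a+b)"
  have "?c - inf w a = ?c + - inf w a" by simp
  also have "\<dots> = ?c + sup (-w) (-a)" by (simp add: neg_inf)
  also have "\<dots> = sup (?c - w) (?c - a)" by (simp add: add_sup_l)
  finally have "?c - inf w a = sup (?c - w) (?c - a)" .
  also have "\<dots> \<le> b"
  proof (rule sup_least)
    show "?c - w \<le> b" using assms by (simp add: le_infI1 order_trans[of _ 0])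
    show "?c - a \<le> b" by (simp add: diff_le_eq add.commute le_infI2)
  qed
  finally have 1: "?c - inf w a \<le> b" .
  have "?c - inf w a \<le> w" using assms by (simp add: diff_le_eq le_infI1 add_increasing)
  with 1 have "?c - inf w a \<le> inf w b" by simp
  then show ?thesis by (metis diff_le_eq add.commute)
qed



lemma SUP_translate:
  fixes f :: "'b \<Rightarrow> 'a::{ordered_ab_group_add,conditionally_complete_lattice}"
  assumes "I \<noteq> {}" "bdd_above (f ` I)"
  shows "t + (SUP i\<in>I. f i) = (SUP i\<in>I. t + f i)"
proof (rule antisym)
  have bd: "bdd_above ((\<lambda>i. t + f i) ` I)"
    using assms(2) by (auto simp: bdd_above_def intro: add_left_mono)
  have "(SUP i\<in>I. f i) \<le> (SUP i\<in>I. t + f i) - t"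
  proof (rule cSUP_least[OF assms(1)])
    fix i assume "i \<in> I"
    then have "t + f i \<le> (SUP i\<in>I. t + f i)" using bd by (rule cSUP_upper)
    then show "f i \<le> (SUP i\<in>I. t + f i) - t" by (simp add: le_diff_eq add.commute)
  qed
  then show "t + (SUP i\<in>I. f i) \<le> (SUP i\<in>I. t + f i)" by (simp add: le_diff_eq add.commute)
  show "(SUP i\<in>I. t + f i) \<le> t + (SUP i\<in>I. f i)"
    by (rule cSUP_least[OF assms(1)]) (simp add: add_left_mono cSUP_upper assms(2))
qed

lemma SUP_inf_distrib:
  fixes f :: "'b \<Rightarrow> 'a::{ordered_ab_group_add,conditionally_complete_lattice}"
  assumes "I \<noteq> {}" "bdd_above (f ` I)"
  shows "inf x (SUP i\<in>I. f i) = (SUP i\<in>I. inf x (f i))"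
proof (rule antisym)
  let ?M = "SUP i\<in>I. f i" and ?s = "SUP i\<in>I. inf x (f i)"
  have bd: "bdd_above ((\<lambda>i. inf x (f i)) ` I)"
    by (rule bdd_aboveI[of _ x]) auto
  have "?M \<le> ?s + sup x ?M - x"
  proof (rule cSUP_least[OF assms(1)])
    fix i assume i: "i \<in> I"
    have "f i = inf x (f i) + sup x (f i) - x" using inf_plus_sup[of x "f i"] by (simp add: algebra_simps)
    also have "\<dots> \<le> ?s + sup x ?M - x"
      using cSUP_upper[OF i bd] cSUP_upper[OF i assms(2)]
      by (intro diff_right_mono add_mono) (auto intro: sup.mono le_supI2)
    finally show "f i \<le> ?s + sup x ?M - x" .
  qed
  then have "x + ?M - sup x ?M \<le> ?s" by (simp add: algebra_simps)
  moreover have "inf x ?M = x + ?M - sup x ?M" using inf_plus_sup[of x ?M] by (simp add: algebra_simps)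
  ultimately show "inf x ?M \<le> ?s" by simp
  show "?s \<le> inf x ?M"
    by (rule cSUP_least[OF assms(1)]) (meson le_infI2 cSUP_upper assms(2) inf.mono order_refl)
qed

lemma SUP_sup_const:
  fixes f :: "'b \<Rightarrow> 'a::conditionally_complete_lattice"
  assumes "I \<noteq> {}" "bdd_above (f ` I)"
  shows "sup (SUP i\<in>I. f i) c = (SUP i\<in>I. sup (f i) c)"
proof (rule antisym)
  obtain M where M: "\<And>i. i \<in> I \<Longrightarrow> f i \<le> M" using assms(2) by (auto simp: bdd_above_def)
  have bd: "bdd_above ((\<lambda>i. sup (f i) c) ` I)"
    by (rule bdd_aboveI[of _ "sup M c"]) (auto intro: sup.mono M)
  obtain i0 where i0: "i0 \<in> I" using assms(1) by auto
  show "sup (SUP i\<in>I. f i) c \<le> (SUP i\<in>I. sup (f i) c)"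
  proof (rule sup_least)
    show "(SUP i\<in>I. f i) \<le> (SUP i\<in>I. sup (f i) c)"
      by (rule cSUP_least[OF assms(1)]) (rule cSUP_upper2[OF bd], auto)
    show "c \<le> (SUP i\<in>I. sup (f i) c)" by (rule cSUP_upper2[OF bd i0]) auto
  qed
  show "(SUP i\<in>I. sup (f i) c) \<le> sup (SUP i\<in>I. f i) c"
    by (rule cSUP_least[OF assms(1)]) (meson le_supI1 cSUP_upper assms(2) sup.mono order_refl)
qed

lemma scaleR_sup_pos:
  fixes a b :: "'a::{ordered_real_vector,lattice}"
  assumes "0 < c" shows "c *\<^sub>R sup a b = sup (c *\<^sub>R a) (c *\<^sub>R b)"
proof (rule antisym)
  have "sup a b \<le> (1/c) *\<^sub>R sup (c *\<^sub>R a) (c *\<^sub>R b)"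
  proof (rule sup_least)
    have "a = (1/c) *\<^sub>R (c *\<^sub>R a)" using assms by simp
    also have "\<dots> \<le> (1/c) *\<^sub>R sup (c *\<^sub>R a) (c *\<^sub>R b)" using assms by (intro scaleR_left_mono) auto
    finally show "a \<le> (1/c) *\<^sub>R sup (c *\<^sub>R a) (c *\<^sub>R b)" .
    have "b = (1/c) *\<^sub>R (c *\<^sub>R b)" using assms by simp
    also have "\<dots> \<le> (1/c) *\<^sub>R sup (c *\<^sub>R a) (c *\<^sub>R b)" using assms by (intro scaleR_left_mono) auto
    finally show "b \<le> (1/c) *\<^sub>R sup (c *\<^sub>R a) (c *\<^sub>R b)" .
  qed
  then have "c *\<^sub>R sup a b \<le> c *\<^sub>R ((1/c) *\<^sub>R sup (c *\<^sub>R a) (c *\<^sub>R b))"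
    using assms by (intro scaleR_left_mono) auto
  then show "c *\<^sub>R sup a b \<le> sup (c *\<^sub>R a) (c *\<^sub>R b)" using assms by simp
  show "sup (c *\<^sub>R a) (c *\<^sub>R b) \<le> c *\<^sub>R sup a b"
    using assms by (auto intro!: sup_least scaleR_left_mono)
qed

lemma scaleR_inf_pos:
  fixes a b :: "'a::{ordered_real_vector,lattice}"
  assumes "0 < c" shows "c *\<^sub>R inf a b = inf (c *\<^sub>R a) (c *\<^sub>R b)"
proof (rule antisym)
  have "(1/c) *\<^sub>R inf (c *\<^sub>R a) (c *\<^sub>R b) \<le> inf a b"
  proof (rule inf_greatest)
    have "(1/c) *\<^sub>R inf (c *\<^sub>R a) (c *\<^sub>R b) \<le> (1/c) *\<^sub>R (c *\<^sub>R a)" using assms by (intro scaleR_left_mono) auto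
    then show "(1/c) *\<^sub>R inf (c *\<^sub>R a) (c *\<^sub>R b) \<le> a" using assms by simp
    have "(1/c) *\<^sub>R inf (c *\<^sub>R a) (c *\<^sub>R b) \<le> (1/c) *\<^sub>R (c *\<^sub>R b)" using assms by (intro scaleR_left_mono) auto
    then show "(1/c) *\<^sub>R inf (c *\<^sub>R a) (c *\<^sub>R b) \<le> b" using assms by simp
  qed
  then have "c *\<^sub>R ((1/c) *\<^sub>R inf (c *\<^sub>R a) (c *\<^sub>R b)) \<le> c *\<^sub>R inf a b"
    using assms by (intro scaleR_left_mono) auto
  then show "inf (c *\<^sub>R a) (c *\<^sub>R b) \<le> c *\<^sub>R inf a b" using assms by simp
  show "c *\<^sub>R inf a b \<le> inf (c *\<^sub>R a) (c *\<^sub>R b)"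
    using assms by (auto intro!: inf_greatest scaleR_left_mono)
qed

lemma SUP_scaleR_pos:
  fixes f :: "'b \<Rightarrow> 'a::{ordered_real_vector,conditionally_complete_lattice}"
  assumes "I \<noteq> {}" "bdd_above (f ` I)" "0 < c"
  shows "c *\<^sub>R (SUP i\<in>I. f i) = (SUP i\<in>I. c *\<^sub>R f i)"
proof (rule antisym)
  obtain M where M: "\<And>i. i \<in> I \<Longrightarrow> f i \<le> M" using assms(2) by (auto simp: bdd_above_def)
  have bd: "bdd_above ((\<lambda>i. c *\<^sub>R f i) ` I)"
    by (rule bdd_aboveI[of _ "c *\<^sub>R M"]) (use assms(3) in \<open>auto intro: scaleR_left_mono M\<close>)
  have "(SUP i\<in>I. f i) \<le> (1/c) *\<^sub>R (SUP i\<in>I. c *\<^sub>R f i)"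
  proof (rule cSUP_least[OF assms(1)])
    fix i assume "i \<in> I"
    then have "c *\<^sub>R f i \<le> (SUP i\<in>I. c *\<^sub>R f i)" using bd by (rule cSUP_upper)
    then have "(1/c) *\<^sub>R (c *\<^sub>R f i) \<le> (1/c) *\<^sub>R (SUP i\<in>I. c *\<^sub>R f i)"
      using assms(3) by (intro scaleR_left_mono) auto
    then show "f i \<le> (1/c) *\<^sub>R (SUP i\<in>I. c *\<^sub>R f i)" using assms(3) by simp
  qed
  then have "c *\<^sub>R (SUP i\<in>I. f i) \<le> c *\<^sub>R ((1/c) *\<^sub>R (SUP i\<in>I. c *\<^sub>R f i))"
    using assms(3) by (intro scaleR_left_mono) auto
  then show "c *\<^sub>R (SUP i\<in>I. f i) \<le> (SUP i\<in>I. c *\<^sub>R f i)" using assms(3) by simp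
  show "(SUP i\<in>I. c *\<^sub>R f i) \<le> c *\<^sub>R (SUP i\<in>I. f i)"
    by (rule cSUP_least[OF assms(1)]) (use assms in \<open>auto intro!: scaleR_left_mono cSUP_upper\<close>)
qed



definition phi :: "'a::conditionally_complete_lattice set \<Rightarrow> 'a \<Rightarrow> 'a" where
  "phi A x = (SUP a\<in>A. inf x a)"

definition Icl :: "'a::conditionally_complete_lattice set \<Rightarrow> 'a set" where
  "Icl A = {w. phi A w = w}"

definition CL :: "'a::conditionally_complete_lattice set \<Rightarrow> bool" where
  "CL T \<longleftrightarrow> T \<noteq> {} \<and> (\<forall>w v. v \<in> T \<and> w \<le> v \<longrightarrow> w \<in> T)
     \<and> (\<forall>S. S \<subseteq> T \<and> S \<noteq> {} \<and> bdd_above S \<longrightarrow> Sup S \<in> T)"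

lemma CL_down: "CL T \<Longrightarrow> v \<in> T \<Longrightarrow> w \<le> v \<Longrightarrow> w \<in> T"
  unfolding CL_def by blast

lemma CL_Sup: "CL T \<Longrightarrow> S \<subseteq> T \<Longrightarrow> S \<noteq> {} \<Longrightarrow> bdd_above S \<Longrightarrow> Sup S \<in> T"
  unfolding CL_def by blast

lemma CL_ne: "CL T \<Longrightarrow> T \<noteq> {}"
  unfolding CL_def by blast

lemma CL_SUP: "CL T \<Longrightarrow> (\<And>i. i \<in> I \<Longrightarrow> f i \<in> T) \<Longrightarrow> I \<noteq> {} \<Longrightarrow> bdd_above (f ` I)
   \<Longrightarrow> (SUP i\<in>I. f i) \<in> T"
  by (rule CL_Sup) auto

lemma CL_sup: "CL T \<Longrightarrow> a \<in> T \<Longrightarrow> b \<in> T \<Longrightarrow> sup a b \<in> T"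
  using CL_Sup[of T "{a,b}"] by (simp add: cSup_insert)

lemma CL_updir: "CL T \<Longrightarrow> updir T"
  unfolding updir_def using CL_ne CL_sup by (metis sup.cobounded1 sup.cobounded2)

lemma bdd_inf: "bdd_above ((\<lambda>a. inf (x::'a::lattice) a) ` A)"
  by (rule bdd_aboveI[of _ x]) auto

lemma phi_le: "A \<noteq> {} \<Longrightarrow> phi A x \<le> x"
  unfolding phi_def by (rule cSUP_least) simp_all

lemma phi_ge: "a \<in> A \<Longrightarrow> inf x a \<le> phi A x"
  unfolding phi_def by (rule cSUP_upper[OF _ bdd_inf])

lemma phi_mono: "A \<noteq> {} \<Longrightarrow> x \<le> y \<Longrightarrow> phi A x \<le> phi A y"
  unfolding phi_def
  by (rule cSUP_least) (auto intro: cSUP_upper2[OF bdd_inf] inf.mono)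

lemma A_sub_Icl: "a \<in> A \<Longrightarrow> a \<in> Icl A"
  unfolding Icl_def using phi_ge[of a A a] phi_le[of A a] by auto

lemma Icl_down:
  fixes A :: "'a::{ordered_ab_group_add,conditionally_complete_lattice} set"
  assumes "A \<noteq> {}" "v \<in> Icl A" "w \<le> v" shows "w \<in> Icl A"
proof -
  have "w = inf w v" using assms(3) by (simp add: inf.absorb1)
  also have "\<dots> = inf w (SUP a\<in>A. inf v a)" using assms(2) by (simp add: Icl_def phi_def)
  also have "\<dots> = (SUP a\<in>A. inf w (inf v a))" by (rule SUP_inf_distrib[OF assms(1) bdd_inf])
  also have "\<dots> = (SUP a\<in>A. inf w a)" using assms(3) by (simp add: inf.absorb1 flip: inf.assoc)
  finally show ?thesis by (simp add: Icl_def phi_def)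
qed

lemma Icl_CL:
  fixes A :: "'a::{ordered_ab_group_add,conditionally_complete_lattice} set"
  assumes "A \<noteq> {}" shows "CL (Icl A)"
  unfolding CL_def
proof (intro conjI allI impI)
  show "Icl A \<noteq> {}" using assms A_sub_Icl by blast
  show "\<And>w v. v \<in> Icl A \<and> w \<le> v \<Longrightarrow> w \<in> Icl A" using Icl_down[OF assms] by blast
  fix S assume S: "S \<subseteq> Icl A \<and> S \<noteq> {} \<and> bdd_above S"
  have "Sup S \<le> phi A (Sup S)"
  proof (rule cSup_least)
    show "S \<noteq> {}" using S by blast
    fix t assume t: "t \<in> S"
    then have "t = phi A t" using S by (auto simp: Icl_def)
    also have "\<dots> \<le> phi A (Sup S)" using t S by (intro phi_mono assms cSup_upper) auto
    finally show "t \<le> phi A (Sup S)" .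
  qed
  then show "Sup S \<in> Icl A" using phi_le[OF assms, of "Sup S"] by (simp add: Icl_def)
qed

lemma phi_in:
  fixes A :: "'a::{ordered_ab_group_add,conditionally_complete_lattice} set"
  assumes "A \<noteq> {}" shows "phi A x \<in> Icl A"
  unfolding phi_def
  by (rule CL_SUP[OF Icl_CL[OF assms] _ assms bdd_inf])
     (auto intro: Icl_down[OF assms] A_sub_Icl)

lemma phi_max:
  fixes A :: "'a::{ordered_ab_group_add,conditionally_complete_lattice} set"
  assumes "A \<noteq> {}" "w \<in> Icl A" "w \<le> x" shows "w \<le> phi A x"
  using phi_mono[OF assms(1) assms(3)] assms(2) by (simp add: Icl_def)

lemma Icl_sub:
  fixes A :: "'a::{ordered_ab_group_add,conditionally_complete_lattice} set"
  assumes "A \<noteq> {}" "CL T" "A \<subseteq> T" shows "Icl A \<subseteq> T"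
proof
  fix w assume "w \<in> Icl A"
  then have "w = (SUP a\<in>A. inf w a)" by (simp add: Icl_def phi_def)
  also have "\<dots> \<in> T"
    by (rule CL_SUP[OF assms(2) _ assms(1) bdd_inf]) (use assms in \<open>auto intro: CL_down\<close>)
  finally show "w \<in> T" .
qed

lemma CL_Icl:
  fixes T :: "'a::{ordered_ab_group_add,conditionally_complete_lattice} set"
  assumes "CL T" shows "Icl T = T"
  using Icl_sub[OF CL_ne[OF assms] assms] A_sub_Icl by blast

lemma Icl_Icl:
  fixes A :: "'a::{ordered_ab_group_add,conditionally_complete_lattice} set"
  assumes "A \<noteq> {}" shows "Icl (Icl A) = Icl A"
  by (rule CL_Icl[OF Icl_CL[OF assms]])

lemma phi_le_iff:
  fixes A B :: "'a::{ordered_ab_group_add,conditionally_complete_lattice} set"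
  assumes "A \<noteq> {}" "B \<noteq> {}"
  shows "(\<forall>x. phi A x \<le> phi B x) \<longleftrightarrow> Icl A \<subseteq> Icl B"
proof
  assume H: "\<forall>x. phi A x \<le> phi B x"
  show "Icl A \<subseteq> Icl B"
  proof
    fix w assume "w \<in> Icl A"
    then have "phi A w = w" by (simp add: Icl_def)
    then have "w \<le> phi B w" using H by metis
    then show "w \<in> Icl B" using phi_le[OF assms(2), of w] by (simp add: Icl_def)
  qed
next
  assume H: "Icl A \<subseteq> Icl B"
  show "\<forall>x. phi A x \<le> phi B x"
  proof
    fix x
    have "phi A x \<in> Icl B" using H phi_in[OF assms(1)] by blast
    then show "phi A x \<le> phi B x" using phi_le[OF assms(1)] phi_max[OF assms(2)] by blast
  qed
qed

lemma phi_eq_iff: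
  fixes A B :: "'a::{ordered_ab_group_add,conditionally_complete_lattice} set"
  assumes "A \<noteq> {}" "B \<noteq> {}"
  shows "phi A = phi B \<longleftrightarrow> Icl A = Icl B"
proof
  assume "phi A = phi B" then show "Icl A = Icl B" by (simp add: Icl_def)
next
  assume "Icl A = Icl B"
  then have "\<forall>x. phi A x \<le> phi B x" "\<forall>x. phi B x \<le> phi A x"
    using phi_le_iff[OF assms] phi_le_iff[OF assms(2,1)] by auto
  then show "phi A = phi B" by (simp add: fun_eq_iff antisym)
qed



lemma sc_rel_iff: "sc_rel A B \<longleftrightarrow> phi A = phi B"
  by (simp add: sc_rel_def phi_def fun_eq_iff)

lemma updir_ne: "updir A \<Longrightarrow> A \<noteq> {}"
  by (simp add: updir_def)

lemma sc_class_mem: "updir A \<Longrightarrow> A \<in> sc_class A"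
  by (simp add: sc_class_def sc_rel_iff)

lemma sc_class_eq_iff:
  fixes A B :: "'a::{ordered_ab_group_add,conditionally_complete_lattice} set"
  assumes "updir A" "updir B"
  shows "sc_class A = sc_class B \<longleftrightarrow> Icl A = Icl B"
proof
  assume "sc_class A = sc_class B"
  then have "B \<in> sc_class A" using sc_class_mem[OF assms(2)] by simp
  then have "phi A = phi B" by (simp add: sc_class_def sc_rel_iff)
  then show "Icl A = Icl B" by (simp add: Icl_def)
next
  assume "Icl A = Icl B"
  then have "phi A = phi B" using phi_eq_iff[OF updir_ne[OF assms(1)] updir_ne[OF assms(2)]] by simp
  then show "sc_class A = sc_class B" by (simp add: sc_class_def sc_rel_iff)
qed

definition Ip :: "'a::conditionally_complete_lattice set set \<Rightarrow> 'a set" where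
  "Ip p = Icl (sc_rep p)"

lemma rep_class: "updir A \<Longrightarrow> sc_rep (sc_class A) \<in> sc_class A"
  unfolding sc_rep_def by (rule someI[of _ A]) (rule sc_class_mem)

lemma rep_class_props:
  assumes "updir A"
  shows "updir (sc_rep (sc_class A))" "phi (sc_rep (sc_class A)) = phi A"
  using rep_class[OF assms] by (auto simp: sc_class_def sc_rel_iff)

lemma Ip_class:
  fixes A :: "'a::{ordered_ab_group_add,conditionally_complete_lattice} set"
  assumes "updir A" shows "Ip (sc_class A) = Icl A"
  using rep_class_props[OF assms] by (simp add: Ip_def Icl_def)

lemma class_in_Xs: "updir A \<Longrightarrow> sc_class A \<in> Xs"
  by (auto simp: Xs_def)

lemma Xs_rep:
  fixes p :: "'a::{ordered_ab_group_add,conditionally_complete_lattice} set set"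
  assumes "p \<in> Xs" shows "updir (sc_rep p)" "sc_rep p \<noteq> {}"
  using assms rep_class_props(1) updir_ne by (auto simp: Xs_def)

lemma Ip_CL:
  fixes p :: "'a::{ordered_ab_group_add,conditionally_complete_lattice} set set"
  assumes "p \<in> Xs" shows "CL (Ip p)"
  unfolding Ip_def by (rule Icl_CL[OF Xs_rep(2)[OF assms]])

lemma Xs_class_Ip:
  fixes p :: "'a::{ordered_ab_group_add,conditionally_complete_lattice} set set"
  assumes "p \<in> Xs" shows "p = sc_class (Ip p)"
proof -
  obtain A where A: "updir A" "p = sc_class A" using assms by (auto simp: Xs_def)
  have "Ip p = Icl A" using Ip_class[OF A(1)] A(2) by simp
  moreover have "updir (Ip p)" using CL_updir[OF Ip_CL[OF assms]] .
  moreover have "Icl (Ip p) = Icl A" using CL_Icl[OF Ip_CL[OF assms]] \<open>Ip p = Icl A\<close> by simp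
  ultimately have "sc_class (Ip p) = sc_class A" using sc_class_eq_iff[OF _ A(1)] by blast
  then show ?thesis using A(2) by simp
qed

lemma Xs_class_rep:
  fixes p :: "'a::{ordered_ab_group_add,conditionally_complete_lattice} set set"
  assumes "p \<in> Xs" shows "p = sc_class (sc_rep p)"
proof -
  have "Icl (Ip p) = Icl (sc_rep p)" using CL_Icl[OF Ip_CL[OF assms]] by (simp add: Ip_def)
  then have "sc_class (Ip p) = sc_class (sc_rep p)"
    using sc_class_eq_iff[OF CL_updir[OF Ip_CL[OF assms]] Xs_rep(1)[OF assms]] by blast
  then show ?thesis using Xs_class_Ip[OF assms] by simp
qed

lemma Xs_eq:
  fixes p q :: "'a::{ordered_ab_group_add,conditionally_complete_lattice} set set"
  assumes "p \<in> Xs" "q \<in> Xs" "Ip p = Ip q" shows "p = q"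
  using Xs_class_Ip[OF assms(1)] Xs_class_Ip[OF assms(2)] assms(3) by simp

lemma Xs_eqI_CL:
  fixes p :: "'a::{ordered_ab_group_add,conditionally_complete_lattice} set set"
  assumes "p \<in> Xs" "CL T" "Ip p = T" shows "p = sc_class T"
  using Xs_class_Ip[OF assms(1)] assms(3) by simp

lemma Ip_class_CL:
  fixes T :: "'a::{ordered_ab_group_add,conditionally_complete_lattice} set"
  assumes "CL T" shows "Ip (sc_class T) = T" "sc_class T \<in> Xs"
  using Ip_class[OF CL_updir[OF assms]] CL_Icl[OF assms] class_in_Xs[OF CL_updir[OF assms]] by auto

lemma sc_le_iff:
  fixes p q :: "'a::{ordered_ab_group_add,conditionally_complete_lattice} set set"
  assumes "p \<in> Xs" "q \<in> Xs" shows "sc_le p q \<longleftrightarrow> Ip p \<subseteq> Ip q"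
proof
  assume "sc_le p q"
  then obtain A B where AB: "updir A" "updir B" "p = sc_class A" "q = sc_class B"
    "\<forall>x. phi A x \<le> phi B x" by (auto simp: sc_le_def phi_def)
  then have "Icl A \<subseteq> Icl B" using phi_le_iff[OF updir_ne[OF AB(1)] updir_ne[OF AB(2)]] by blast
  then show "Ip p \<subseteq> Ip q" using Ip_class[OF AB(1)] Ip_class[OF AB(2)] AB(3,4) by simp
next
  assume H: "Ip p \<subseteq> Ip q"
  have "\<forall>x. phi (sc_rep p) x \<le> phi (sc_rep q) x"
    using H phi_le_iff[OF Xs_rep(2)[OF assms(1)] Xs_rep(2)[OF assms(2)]] by (simp add: Ip_def)
  moreover have "p = sc_class (sc_rep p)" "q = sc_class (sc_rep q)"
    using Xs_class_rep assms by blast+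
  ultimately show "sc_le p q" unfolding sc_le_def phi_def using Xs_rep(1) assms by blast
qed

lemma Icl_single: "Icl {w::'a::conditionally_complete_lattice} = {v. v \<le> w}"
  by (auto simp: Icl_def phi_def inf.absorb_iff1)

lemma updir_single: "updir {w}"
  by (simp add: updir_def)

lemma Ip_emb:
  fixes w :: "'a::{ordered_ab_group_add,conditionally_complete_lattice}"
  shows "Ip (emb w) = {v. v \<le> w}" "emb w \<in> Xs"
  using Ip_class[OF updir_single] Icl_single class_in_Xs[OF updir_single] by (auto simp: emb_def)

lemma emb_le:
  fixes p :: "'a::{ordered_ab_group_add,conditionally_complete_lattice} set set"
  assumes "p \<in> Xs" shows "sc_le (emb w) p \<longleftrightarrow> w \<in> Ip p"
  using sc_le_iff[OF Ip_emb(2) assms] Ip_emb(1) CL_down[OF Ip_CL[OF assms]] by auto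

lemma Xs_pos_iff:
  fixes p :: "'a::{ordered_real_vector,conditionally_complete_lattice} set set"
  shows "p \<in> Xs_pos \<longleftrightarrow> p \<in> Xs \<and> 0 \<in> Ip p"
  using emb_le by (auto simp: Xs_pos_def sc_zero_def)

lemma sc_Sup_eq:
  fixes z :: "'a::{ordered_ab_group_add,conditionally_complete_lattice} set set"
  assumes "z \<in> Xs" "\<forall>s\<in>S. sc_le s z" "\<forall>w\<in>Xs. (\<forall>s\<in>S. sc_le s w) \<longrightarrow> sc_le z w"
  shows "sc_Sup S = z"
  unfolding sc_Sup_def
proof (rule the_equality)
  show "z \<in> Xs \<and> (\<forall>s\<in>S. sc_le s z) \<and> (\<forall>w\<in>Xs. (\<forall>s\<in>S. sc_le s w) \<longrightarrow> sc_le z w)"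
    using assms by blast
  fix z' assume H: "z' \<in> Xs \<and> (\<forall>s\<in>S. sc_le s z') \<and> (\<forall>w\<in>Xs. (\<forall>s\<in>S. sc_le s w) \<longrightarrow> sc_le z' w)"
  then have "sc_le z z'" "sc_le z' z" using assms by auto
  then have "Ip z \<subseteq> Ip z'" "Ip z' \<subseteq> Ip z" using H assms(1) sc_le_iff by blast+
  then show "z' = z" using H assms(1) Xs_eq by blast
qed

lemma sc_Inf_eq:
  fixes z :: "'a::{ordered_ab_group_add,conditionally_complete_lattice} set set"
  assumes "z \<in> Xs" "\<forall>s\<in>S. sc_le z s" "\<forall>w\<in>Xs. (\<forall>s\<in>S. sc_le w s) \<longrightarrow> sc_le w z"
  shows "sc_Inf S = z"
  unfolding sc_Inf_def
proof (rule the_equality)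
  show "z \<in> Xs \<and> (\<forall>s\<in>S. sc_le z s) \<and> (\<forall>w\<in>Xs. (\<forall>s\<in>S. sc_le w s) \<longrightarrow> sc_le w z)"
    using assms by blast
  fix z' assume H: "z' \<in> Xs \<and> (\<forall>s\<in>S. sc_le z' s) \<and> (\<forall>w\<in>Xs. (\<forall>s\<in>S. sc_le w s) \<longrightarrow> sc_le w z')"
  then have "sc_le z z'" "sc_le z' z" using assms by auto
  then have "Ip z \<subseteq> Ip z'" "Ip z' \<subseteq> Ip z" using H assms(1) sc_le_iff by blast+
  then show "z' = z" using H assms(1) Xs_eq by blast
qed



section \<open>rabs and ideals\<close>

lemma rabs_ge1: "x \<le> rabs x" by (simp add: rabs_def)
lemma rabs_ge2: "- x \<le> rabs x" by (simp add: rabs_def)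
lemma rabs_least: "x \<le> y \<Longrightarrow> - x \<le> y \<Longrightarrow> rabs x \<le> y" by (simp add: rabs_def)

lemma rabs_nonneg: "0 \<le> rabs (x::'a::{ordered_real_vector,lattice})"
proof -
  have "x + - x \<le> rabs x + rabs x" by (intro add_mono rabs_ge1 rabs_ge2)
  then have "0 \<le> rabs x + rabs x" by simp
  then have "0 \<le> (1/2::real) *\<^sub>R (rabs x + rabs x)" by (intro scaleR_nonneg_nonneg) auto
  moreover have "(1/2::real) *\<^sub>R (rabs x + rabs x) = rabs x"
    by (simp add: scaleR_2[symmetric])
  ultimately show ?thesis by simp
qed

lemma rabs_pos: "0 \<le> (x::'a::{ordered_real_vector,lattice}) \<Longrightarrow> rabs x = x"
  unfolding rabs_def by (rule sup_absorb1) (simp add: order_trans[of "-x" 0 x])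

lemma rabs_rabs: "rabs (rabs (x::'a::{ordered_real_vector,lattice})) = rabs x"
  by (rule rabs_pos[OF rabs_nonneg])

lemma rabs_le0: "rabs (x::'a::{ordered_real_vector,lattice}) \<le> 0 \<Longrightarrow> x = 0"
  using rabs_ge1[of x] rabs_ge2[of x] by (metis antisym neg_le_0_iff_le order_trans)

lemma rabs_add: "rabs ((a::'a::{ordered_real_vector,lattice}) + b) \<le> rabs a + rabs b"
  by (rule rabs_least) (use add_mono[OF rabs_ge1[of a] rabs_ge1[of b]] add_mono[OF rabs_ge2[of a] rabs_ge2[of b]] in simp_all)

lemma rabs_scale: "rabs (c *\<^sub>R (x::'a::{ordered_real_vector,lattice})) \<le> \<bar>c\<bar> *\<^sub>R rabs x"
proof (cases "0 \<le> c")
  case True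
  then show ?thesis
    by (intro rabs_least) (auto intro: scaleR_left_mono rabs_ge1 rabs_ge2 simp flip: scaleR_minus_right)
next
  case False
  then have e: "c *\<^sub>R x = \<bar>c\<bar> *\<^sub>R (- x)" "- (c *\<^sub>R x) = \<bar>c\<bar> *\<^sub>R x" by simp_all
  have "\<bar>c\<bar> *\<^sub>R (- x) \<le> \<bar>c\<bar> *\<^sub>R rabs x" by (intro scaleR_left_mono rabs_ge2) auto
  moreover have "\<bar>c\<bar> *\<^sub>R x \<le> \<bar>c\<bar> *\<^sub>R rabs x" by (intro scaleR_left_mono rabs_ge1) auto
  ultimately show ?thesis using e by (metis rabs_least)
qed

lemma sup0_le_rabs: "sup (a::'a::{ordered_real_vector,lattice}) 0 \<le> rabs a"
  using rabs_ge1 rabs_nonneg by (rule sup_least)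

lemma ideal_zero: "is_ideal B \<Longrightarrow> 0 \<in> B" by (simp add: is_ideal_def)
lemma ideal_add: "is_ideal B \<Longrightarrow> x \<in> B \<Longrightarrow> y \<in> B \<Longrightarrow> x + y \<in> B" by (simp add: is_ideal_def)
lemma ideal_scale: "is_ideal B \<Longrightarrow> x \<in> B \<Longrightarrow> c *\<^sub>R x \<in> B" by (simp add: is_ideal_def)
lemma ideal_solid: "is_ideal B \<Longrightarrow> x \<in> B \<Longrightarrow> rabs y \<le> rabs x \<Longrightarrow> y \<in> B" by (simp add: is_ideal_def)

lemma ideal_pos_down:
  fixes x y :: "'a::{ordered_real_vector,lattice}"
  shows "is_ideal B \<Longrightarrow> x \<in> B \<Longrightarrow> 0 \<le> y \<Longrightarrow> y \<le> rabs x \<Longrightarrow> y \<in> B"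
  by (rule ideal_solid[of B x y]) (simp_all add: rabs_pos)

lemma ideal_rabs:
  fixes x :: "'a::{ordered_real_vector,lattice}"
  shows "is_ideal B \<Longrightarrow> x \<in> B \<Longrightarrow> rabs x \<in> B"
  using ideal_solid rabs_rabs by (metis order_refl)

lemma ideal_sup:
  fixes a b :: "'a::{ordered_real_vector,lattice}"
  assumes "is_ideal B" "a \<in> B" "b \<in> B" shows "sup a b \<in> B"
proof -
  have s: "rabs a + rabs b \<in> B" using assms by (intro ideal_add ideal_rabs)
  have "rabs (sup a b) \<le> rabs a + rabs b"
  proof (rule rabs_least)
    show "sup a b \<le> rabs a + rabs b"
      using rabs_ge1[of a] rabs_ge1[of b] rabs_nonneg[of a] rabs_nonneg[of b]
      by (intro sup_least) (auto intro: add_increasing add_increasing2)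
    have "- sup a b \<le> - a" by simp
    also have "\<dots> \<le> rabs a + rabs b" using rabs_ge2[of a] rabs_nonneg[of b] by (intro add_increasing2)
    finally show "- sup a b \<le> rabs a + rabs b" .
  qed
  also have "\<dots> = rabs (rabs a + rabs b)"
    using rabs_nonneg[of a] rabs_nonneg[of b] by (simp add: rabs_pos)
  finally show ?thesis using ideal_solid[OF assms(1) s] by blast
qed

lemma ideal_updir:
  fixes B :: "'a::{ordered_real_vector,lattice} set"
  assumes "is_ideal B" shows "updir B"
  unfolding updir_def
proof (intro conjI ballI)
  show "B \<noteq> {}" using ideal_zero[OF assms] by blast
  fix a b assume "a \<in> B" "b \<in> B"
  then have "sup a b \<in> B" by (rule ideal_sup[OF assms])
  then show "\<exists>c\<in>B. a \<le> c \<and> b \<le> c" by (intro bexI[of _ "sup a b"]) auto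
qed

lemma band_ideal: "is_band B \<Longrightarrow> is_ideal B" by (simp add: is_band_def)
lemma band_Sup: "is_band B \<Longrightarrow> D \<subseteq> B \<Longrightarrow> D \<noteq> {} \<Longrightarrow> bdd_above D \<Longrightarrow> Sup D \<in> B"
  by (simp add: is_band_def)



section \<open>Operations on Xs\<close>

lemma CL_inter:
  fixes T U :: "'a::{ordered_ab_group_add,conditionally_complete_lattice} set"
  assumes "CL T" "CL U" shows "CL (T \<inter> U)"
proof -
  obtain a b where ab: "a \<in> T" "b \<in> U" using CL_ne[OF assms(1)] CL_ne[OF assms(2)] by blast
  have "inf a b \<in> T \<inter> U" using CL_down[OF assms(1) ab(1)] CL_down[OF assms(2) ab(2)] by simp
  show ?thesis unfolding CL_def
  proof (intro conjI allI impI)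
    show "T \<inter> U \<noteq> {}" using \<open>inf a b \<in> T \<inter> U\<close> by blast
    fix w v assume "v \<in> T \<inter> U \<and> w \<le> v"
    then show "w \<in> T \<inter> U" using CL_down[OF assms(1)] CL_down[OF assms(2)] by blast
  next
    fix S assume "S \<subseteq> T \<inter> U \<and> S \<noteq> {} \<and> bdd_above S"
    then show "Sup S \<in> T \<inter> U" using CL_Sup[OF assms(1), of S] CL_Sup[OF assms(2), of S] by blast
  qed
qed

lemma sc_inf_Ip:
  fixes p q :: "'a::{ordered_ab_group_add,conditionally_complete_lattice} set set"
  assumes "p \<in> Xs" "q \<in> Xs"
  shows "sc_inf p q = sc_class (Ip p \<inter> Ip q)" "sc_inf p q \<in> Xs" "Ip (sc_inf p q) = Ip p \<inter> Ip q"
proof -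
  have C: "CL (Ip p \<inter> Ip q)" by (rule CL_inter[OF Ip_CL[OF assms(1)] Ip_CL[OF assms(2)]])
  note I = Ip_class_CL[OF C]
  show e: "sc_inf p q = sc_class (Ip p \<inter> Ip q)"
    unfolding sc_inf_def
  proof (rule sc_Inf_eq)
    show "sc_class (Ip p \<inter> Ip q) \<in> Xs" by (rule I(2))
    have "sc_le (sc_class (Ip p \<inter> Ip q)) p" "sc_le (sc_class (Ip p \<inter> Ip q)) q"
      using sc_le_iff[OF I(2) assms(1)] sc_le_iff[OF I(2) assms(2)] I(1) by simp_all
    then show "\<forall>s\<in>{p, q}. sc_le (sc_class (Ip p \<inter> Ip q)) s" by simp
    show "\<forall>w\<in>Xs. (\<forall>s\<in>{p, q}. sc_le w s) \<longrightarrow> sc_le w (sc_class (Ip p \<inter> Ip q))"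
    proof (intro ballI impI)
      fix w assume w: "w \<in> Xs" "\<forall>s\<in>{p, q}. sc_le w s"
      then have "Ip w \<subseteq> Ip p" "Ip w \<subseteq> Ip q" using sc_le_iff[OF w(1) assms(1)] sc_le_iff[OF w(1) assms(2)] by simp_all
      then show "sc_le w (sc_class (Ip p \<inter> Ip q))" using sc_le_iff[OF w(1) I(2)] I(1) by simp
    qed
  qed
  show "sc_inf p q \<in> Xs" "Ip (sc_inf p q) = Ip p \<inter> Ip q" using e I by simp_all
qed

definition supS :: "'a::lattice set \<Rightarrow> 'a set \<Rightarrow> 'a set" where
  "supS A B = {sup a b | a b. a \<in> A \<and> b \<in> B}"

lemma supS_updir:
  fixes A B :: "'a::{ordered_ab_group_add,conditionally_complete_lattice} set"
  assumes "CL A" "CL B" shows "updir (supS A B)"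
  unfolding updir_def supS_def
proof (intro conjI ballI)
  show "{sup a b |a b. a \<in> A \<and> b \<in> B} \<noteq> {}" using CL_ne[OF assms(1)] CL_ne[OF assms(2)] by blast
  fix x y assume "x \<in> {sup a b |a b. a \<in> A \<and> b \<in> B}" "y \<in> {sup a b |a b. a \<in> A \<and> b \<in> B}"
  then obtain a b a' b' where x: "x = sup a b" "a \<in> A" "b \<in> B" and y: "y = sup a' b'" "a' \<in> A" "b' \<in> B"
    by blast
  have "sup (sup a a') (sup b b') \<in> {sup a b |a b. a \<in> A \<and> b \<in> B}"
    using CL_sup[OF assms(1) x(2) y(2)] CL_sup[OF assms(2) x(3) y(3)] by blast
  moreover have "x \<le> sup (sup a a') (sup b b')" "y \<le> sup (sup a a') (sup b b')"
    using x y by (auto intro: le_supI1 le_supI2)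
  ultimately show "\<exists>c\<in>{sup a b |a b. a \<in> A \<and> b \<in> B}. x \<le> c \<and> y \<le> c" by blast
qed

lemma sc_sup_Ip:
  fixes p q :: "'a::{ordered_ab_group_add,conditionally_complete_lattice} set set"
  assumes "p \<in> Xs" "q \<in> Xs"
  shows "sc_sup p q = sc_class (supS (Ip p) (Ip q))" "sc_sup p q \<in> Xs"
    "Ip (sc_sup p q) = Icl (supS (Ip p) (Ip q))"
proof -
  note Cp = Ip_CL[OF assms(1)] and Cq = Ip_CL[OF assms(2)]
  note U = supS_updir[OF Cp Cq]
  have I: "Ip (sc_class (supS (Ip p) (Ip q))) = Icl (supS (Ip p) (Ip q))" by (rule Ip_class[OF U])
  have Z: "sc_class (supS (Ip p) (Ip q)) \<in> Xs" by (rule class_in_Xs[OF U])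
  have ne: "supS (Ip p) (Ip q) \<noteq> {}" using U updir_ne by blast
  have up1: "Ip p \<subseteq> Icl (supS (Ip p) (Ip q))"
  proof
    fix a assume a: "a \<in> Ip p"
    obtain b where b: "b \<in> Ip q" using CL_ne[OF Cq] by blast
    have "sup a b \<in> Icl (supS (Ip p) (Ip q))" using a b by (intro A_sub_Icl) (auto simp: supS_def)
    then show "a \<in> Icl (supS (Ip p) (Ip q))" by (rule Icl_down[OF ne]) simp
  qed
  have up2: "Ip q \<subseteq> Icl (supS (Ip p) (Ip q))"
  proof
    fix b assume b: "b \<in> Ip q"
    obtain a where a: "a \<in> Ip p" using CL_ne[OF Cp] by blast
    have "sup a b \<in> Icl (supS (Ip p) (Ip q))" using a b by (intro A_sub_Icl) (auto simp: supS_def)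
    then show "b \<in> Icl (supS (Ip p) (Ip q))" by (rule Icl_down[OF ne]) simp
  qed
  show e: "sc_sup p q = sc_class (supS (Ip p) (Ip q))"
    unfolding sc_sup_def
  proof (rule sc_Sup_eq[OF Z])
    have "sc_le p (sc_class (supS (Ip p) (Ip q)))" "sc_le q (sc_class (supS (Ip p) (Ip q)))"
      using sc_le_iff[OF assms(1) Z] sc_le_iff[OF assms(2) Z] I up1 up2 by simp_all
    then show "\<forall>s\<in>{p, q}. sc_le s (sc_class (supS (Ip p) (Ip q)))" by simp
    show "\<forall>w\<in>Xs. (\<forall>s\<in>{p, q}. sc_le s w) \<longrightarrow> sc_le (sc_class (supS (Ip p) (Ip q))) w"
    proof (intro ballI impI)
      fix w assume w: "w \<in> Xs" "\<forall>s\<in>{p, q}. sc_le s w"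
      then have "Ip p \<subseteq> Ip w" "Ip q \<subseteq> Ip w" using sc_le_iff[OF assms(1) w(1)] sc_le_iff[OF assms(2) w(1)] by simp_all
      then have "supS (Ip p) (Ip q) \<subseteq> Ip w"
        using CL_sup[OF Ip_CL[OF w(1)]] by (auto simp: supS_def)
      then have "Icl (supS (Ip p) (Ip q)) \<subseteq> Ip w" by (rule Icl_sub[OF ne Ip_CL[OF w(1)]])
      then show "sc_le (sc_class (supS (Ip p) (Ip q))) w" using sc_le_iff[OF Z w(1)] I by simp
    qed
  qed
  show "sc_sup p q \<in> Xs" "Ip (sc_sup p q) = Icl (supS (Ip p) (Ip q))" using e I Z by simp_all
qed

definition sumset :: "'a::plus set \<Rightarrow> 'a set \<Rightarrow> 'a set" where
  "sumset A B = {a + b | a b. a \<in> A \<and> b \<in> B}"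

lemma sumset_updir:
  fixes A B :: "'a::{ordered_ab_group_add,conditionally_complete_lattice} set"
  assumes "updir A" "updir B" shows "updir (sumset A B)"
  unfolding updir_def sumset_def
proof (intro conjI ballI)
  show "{a + b |a b. a \<in> A \<and> b \<in> B} \<noteq> {}" using assms by (auto simp: updir_def)
  fix x y assume "x \<in> {a + b |a b. a \<in> A \<and> b \<in> B}" "y \<in> {a + b |a b. a \<in> A \<and> b \<in> B}"
  then obtain a b a' b' where x: "x = a + b" "a \<in> A" "b \<in> B" and y: "y = a' + b'" "a' \<in> A" "b' \<in> B"
    by blast
  obtain c where c: "c \<in> A" "a \<le> c" "a' \<le> c" using assms(1) x(2) y(2) by (auto simp: updir_def)
  obtain d where d: "d \<in> B" "b \<le> d" "b' \<le> d" using assms(2) x(3) y(3) by (auto simp: updir_def)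
  have "c + d \<in> {a + b |a b. a \<in> A \<and> b \<in> B}" using c d by blast
  moreover have "x \<le> c + d" "y \<le> c + d" using x y c d by (auto intro: add_mono)
  ultimately show "\<exists>c\<in>{a + b |a b. a \<in> A \<and> b \<in> B}. x \<le> c \<and> y \<le> c" by blast
qed

lemma sum_in_Icl:
  fixes A B :: "'a::{ordered_ab_group_add,conditionally_complete_lattice} set"
  assumes "A \<noteq> {}" "B \<noteq> {}" "w1 \<in> Icl A" "w2 \<in> Icl B"
  shows "w1 + w2 \<in> Icl (sumset A B)"
proof -
  let ?C = "sumset A B"
  have neC: "?C \<noteq> {}" using assms(1,2) by (auto simp: sumset_def)
  note CC = Icl_CL[OF neC]
  have w1: "w1 = (SUP a\<in>A. inf w1 a)" and w2: "w2 = (SUP b\<in>B. inf w2 b)"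
    using assms(3,4) by (simp_all add: Icl_def phi_def)
  have inner: "inf w2 b + w1 \<in> Icl ?C" if b: "b \<in> B" for b
  proof -
    have "inf w2 b + w1 = (SUP a\<in>A. inf w2 b + inf w1 a)"
      by (subst w1) (rule SUP_translate[OF assms(1) bdd_inf])
    also have "\<dots> \<in> Icl ?C"
    proof (rule CL_SUP[OF CC _ assms(1)])
      fix a assume a: "a \<in> A"
      have "a + b \<in> Icl ?C" using a b by (intro A_sub_Icl) (auto simp: sumset_def)
      moreover have "inf w2 b + inf w1 a \<le> a + b" by (simp add: add_mono add.commute)
      ultimately show "inf w2 b + inf w1 a \<in> Icl ?C" using Icl_down[OF neC] by blast
    next
      show "bdd_above ((\<lambda>a. inf w2 b + inf w1 a) ` A)"
        by (rule bdd_aboveI[of _ "inf w2 b + w1"]) (auto intro: add_left_mono)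
    qed
    finally show ?thesis .
  qed
  have "w1 + w2 = (SUP b\<in>B. w1 + inf w2 b)"
    by (subst w2) (rule SUP_translate[OF assms(2) bdd_inf])
  also have "\<dots> \<in> Icl ?C"
  proof (rule CL_SUP[OF CC _ assms(2)])
    show "\<And>b. b \<in> B \<Longrightarrow> w1 + inf w2 b \<in> Icl ?C" using inner by (simp add: add.commute)
    show "bdd_above ((\<lambda>b. w1 + inf w2 b) ` B)"
      by (rule bdd_aboveI[of _ "w1 + w2"]) (auto intro: add_left_mono)
  qed
  finally show ?thesis .
qed

lemma sc_add_Ip:
  fixes p q :: "'a::{ordered_real_vector,conditionally_complete_lattice} set set"
  assumes "p \<in> Xs" "q \<in> Xs"
  shows "sc_add p q \<in> Xs" "Ip (sc_add p q) = Icl (sumset (Ip p) (Ip q))"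
proof -
  let ?R = "sc_rep p" and ?S = "sc_rep q"
  have U: "updir (sumset ?R ?S)" by (rule sumset_updir[OF Xs_rep(1)[OF assms(1)] Xs_rep(1)[OF assms(2)]])
  have e: "sc_add p q = sc_class (sumset ?R ?S)" by (simp add: sc_add_def sumset_def)
  show "sc_add p q \<in> Xs" using e class_in_Xs[OF U] by simp
  have neR: "?R \<noteq> {}" and neS: "?S \<noteq> {}" using Xs_rep assms by blast+
  have neIp: "Ip p \<noteq> {}" "Ip q \<noteq> {}" using CL_ne Ip_CL assms by blast+
  have ne1: "sumset ?R ?S \<noteq> {}" using U updir_ne by blast
  have ne2: "sumset (Ip p) (Ip q) \<noteq> {}" using neIp by (auto simp: sumset_def)
  have "Icl (sumset ?R ?S) = Icl (sumset (Ip p) (Ip q))"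
  proof (rule antisym)
    have "sumset ?R ?S \<subseteq> sumset (Ip p) (Ip q)"
      using A_sub_Icl by (auto simp: sumset_def Ip_def)
    also have "\<dots> \<subseteq> Icl (sumset (Ip p) (Ip q))" using A_sub_Icl by blast
    finally show "Icl (sumset ?R ?S) \<subseteq> Icl (sumset (Ip p) (Ip q))"
      by (rule Icl_sub[OF ne1 Icl_CL[OF ne2]])
    have "sumset (Ip p) (Ip q) \<subseteq> Icl (sumset ?R ?S)"
      using sum_in_Icl[OF neR neS] by (auto simp: sumset_def Ip_def)
    then show "Icl (sumset (Ip p) (Ip q)) \<subseteq> Icl (sumset ?R ?S)"
      by (rule Icl_sub[OF ne2 Icl_CL[OF ne1]])
  qed
  then show "Ip (sc_add p q) = Icl (sumset (Ip p) (Ip q))" using e Ip_class[OF U] by simp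
qed



lemma SUP_image_eq: "(SUP y\<in>f ` A. g y) = (SUP a\<in>A. g (f a))"
  by (simp add: image_image)

lemma sc_scale_pos:
  fixes p :: "'a::{ordered_real_vector,conditionally_complete_lattice} set set"
  assumes "p \<in> Xs" "0 < c"
  shows "sc_scale c p \<in> Xs" "Ip (sc_scale c p) = (\<lambda>w. c *\<^sub>R w) ` Ip p"
proof -
  let ?R = "sc_rep p"
  let ?cR = "(\<lambda>a. c *\<^sub>R a) ` ?R"
  have U: "updir ?R" and neR: "?R \<noteq> {}" using Xs_rep[OF assms(1)] by auto
  have UC: "updir ?cR"
    unfolding updir_def
  proof (intro conjI ballI)
    show "?cR \<noteq> {}" using neR by blast
    fix x y assume "x \<in> ?cR" "y \<in> ?cR"
    then obtain a b where ab: "a \<in> ?R" "b \<in> ?R" "x = c *\<^sub>R a" "y = c *\<^sub>R b" by blast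
    then obtain d where d: "d \<in> ?R" "a \<le> d" "b \<le> d" using U by (auto simp: updir_def)
    then show "\<exists>z\<in>?cR. x \<le> z \<and> y \<le> z" using ab assms(2)
      by (intro bexI[of _ "c *\<^sub>R d"]) (auto intro: scaleR_left_mono)
  qed
  have e: "sc_scale c p = sc_class ?cR" by (simp add: sc_scale_def)
  show "sc_scale c p \<in> Xs" using e class_in_Xs[OF UC] by simp
  have phic: "phi ?cR x = c *\<^sub>R phi ?R ((1/c) *\<^sub>R x)" for x
  proof -
    have "phi ?cR x = (SUP a\<in>?R. inf x (c *\<^sub>R a))" by (simp add: phi_def SUP_image_eq)
    also have "\<dots> = (SUP a\<in>?R. c *\<^sub>R inf ((1/c) *\<^sub>R x) a)"
      using assms(2) by (simp add: scaleR_inf_pos)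
    also have "\<dots> = c *\<^sub>R phi ?R ((1/c) *\<^sub>R x)"
      unfolding phi_def by (rule SUP_scaleR_pos[OF neR bdd_inf assms(2), symmetric])
    finally show ?thesis .
  qed
  have "Icl ?cR = (\<lambda>w. c *\<^sub>R w) ` Icl ?R"
  proof (intro set_eqI iffI)
    fix w assume "w \<in> Icl ?cR"
    then have "c *\<^sub>R phi ?R ((1/c) *\<^sub>R w) = w" using phic by (simp add: Icl_def)
    then have "(1/c) *\<^sub>R (c *\<^sub>R phi ?R ((1/c) *\<^sub>R w)) = (1/c) *\<^sub>R w" by simp
    then have "phi ?R ((1/c) *\<^sub>R w) = (1/c) *\<^sub>R w" using assms(2) by simp
    then have "(1/c) *\<^sub>R w \<in> Icl ?R" by (simp add: Icl_def)
    moreover have "w = c *\<^sub>R ((1/c) *\<^sub>R w)" using assms(2) by simp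
    ultimately show "w \<in> (\<lambda>w. c *\<^sub>R w) ` Icl ?R" by blast
  next
    fix w assume "w \<in> (\<lambda>w. c *\<^sub>R w) ` Icl ?R"
    then obtain v where v: "v \<in> Icl ?R" "w = c *\<^sub>R v" by blast
    then have "phi ?cR w = c *\<^sub>R phi ?R v" using phic assms(2) by simp
    also have "\<dots> = w" using v by (simp add: Icl_def)
    finally show "w \<in> Icl ?cR" by (simp add: Icl_def)
  qed
  then show "Ip (sc_scale c p) = (\<lambda>w. c *\<^sub>R w) ` Ip p" using e Ip_class[OF UC] by (simp add: Ip_def)
qed

lemma sc_scale_zero:
  fixes p :: "'a::{ordered_real_vector,conditionally_complete_lattice} set set"
  assumes "p \<in> Xs" shows "sc_scale 0 p = emb 0"
proof -
  have "(\<lambda>a. (0::real) *\<^sub>R a) ` sc_rep p = {0}" using Xs_rep(2)[OF assms] by auto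
  then show ?thesis by (simp add: sc_scale_def emb_def)
qed

lemma infty_class:
  fixes B :: "'a::{ordered_real_vector,conditionally_complete_lattice} set"
  assumes "is_ideal B"
  shows "infty B = sc_class B" "infty B \<in> Xs" "Ip (infty B) = Icl B"
proof -
  note U = ideal_updir[OF assms]
  have Z: "sc_class B \<in> Xs" by (rule class_in_Xs[OF U])
  have I: "Ip (sc_class B) = Icl B" by (rule Ip_class[OF U])
  have neB: "B \<noteq> {}" using U updir_ne by blast
  show e: "infty B = sc_class B"
    unfolding infty_def
  proof (rule sc_Sup_eq[OF Z])
    show "\<forall>s\<in>emb ` B. sc_le s (sc_class B)"
      using emb_le[OF Z] I A_sub_Icl by auto
    show "\<forall>w\<in>Xs. (\<forall>s\<in>emb ` B. sc_le s w) \<longrightarrow> sc_le (sc_class B) w"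
    proof (intro ballI impI)
      fix w assume w: "w \<in> Xs" "\<forall>s\<in>emb ` B. sc_le s w"
      then have "B \<subseteq> Ip w" using emb_le[OF w(1)] by auto
      then have "Icl B \<subseteq> Ip w" by (rule Icl_sub[OF neB Ip_CL[OF w(1)]])
      then show "sc_le (sc_class B) w" using sc_le_iff[OF Z w(1)] I by simp
    qed
  qed
  show "infty B \<in> Xs" "Ip (infty B) = Icl B" using e Z I by simp_all
qed

section \<open>Bands\<close>

lemma band_ne: "is_band B \<Longrightarrow> B \<noteq> {}"
  using ideal_zero band_ideal by blast

lemma band_Icl_pos:
  fixes B :: "'a::{ordered_real_vector,conditionally_complete_lattice} set"
  assumes "is_band B" "w \<in> Icl B" shows "sup w 0 \<in> B"
proof -
  note I = band_ideal[OF assms(1)] and ne = band_ne[OF assms(1)]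
  have "w = (SUP b\<in>B. inf w b)" using assms(2) by (simp add: Icl_def phi_def)
  then have "sup w 0 = sup (SUP b\<in>B. inf w b) 0" by simp
  also have "\<dots> = (SUP b\<in>B. sup (inf w b) 0)" by (rule SUP_sup_const[OF ne bdd_inf])
  also have "\<dots> \<in> B"
  proof (rule band_Sup[OF assms(1)])
    show "(\<lambda>b. sup (inf w b) 0) ` B \<subseteq> B"
    proof
      fix y assume "y \<in> (\<lambda>b. sup (inf w b) 0) ` B"
      then obtain b where b: "b \<in> B" "y = sup (inf w b) 0" by blast
      have "y \<le> sup b 0" using b by (simp add: le_supI1)
      also have "\<dots> \<le> rabs b" by (rule sup0_le_rabs)
      finally show "y \<in> B" using b by (intro ideal_pos_down[OF I b(1)]) auto
    qed
    show "(\<lambda>b. sup (inf w b) 0) ` B \<noteq> {}" using ne by blast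
    show "bdd_above ((\<lambda>b. sup (inf w b) 0) ` B)"
      by (rule bdd_aboveI[of _ "sup w 0"]) (auto intro: sup.mono)
  qed
  finally show ?thesis .
qed

lemma band_Icl_iff:
  fixes B :: "'a::{ordered_real_vector,conditionally_complete_lattice} set"
  assumes "is_band B" shows "w \<in> Icl B \<longleftrightarrow> sup w 0 \<in> B"
proof
  assume "sup w 0 \<in> B"
  then have "sup w 0 \<in> Icl B" by (rule A_sub_Icl)
  then show "w \<in> Icl B" by (rule Icl_down[OF band_ne[OF assms]]) simp
qed (rule band_Icl_pos[OF assms])

lemma band_proj:
  fixes B :: "'a::{ordered_real_vector,conditionally_complete_lattice} set"
  assumes "is_band B" "0 \<le> x"
  shows "\<exists>P. P \<in> B \<and> 0 \<le> P \<and> P \<le> x \<and> (\<forall>b\<in>B. inf (x - P) (rabs b) = 0)"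
proof -
  note I = band_ideal[OF assms(1)]
  let ?D = "{b \<in> B. 0 \<le> b \<and> b \<le> x}"
  let ?P = "Sup ?D"
  have D0: "0 \<in> ?D" using ideal_zero[OF I] assms(2) by simp
  have bd: "bdd_above ?D" by (rule bdd_aboveI[of _ x]) auto
  have PB: "?P \<in> B" using band_Sup[OF assms(1), of ?D] D0 bd by blast
  have P0: "0 \<le> ?P" using cSup_upper[OF D0 bd] .
  have Px: "?P \<le> x" using D0 by (intro cSup_least) auto
  have "inf (x - ?P) (rabs b) = 0" if b: "b \<in> B" for b
  proof -
    let ?c = "inf (x - ?P) (rabs b)"
    have c0: "0 \<le> ?c" using Px rabs_nonneg[of b] by simp
    have "?c \<le> rabs b" by simp
    then have cB: "?c \<in> B" using c0 by (intro ideal_pos_down[OF I b])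
    have "?P + ?c \<in> ?D"
    proof (intro CollectI conjI)
      show "?P + ?c \<in> B" using ideal_add[OF I PB cB] .
      show "0 \<le> ?P + ?c" using P0 c0 by simp
      have "?c \<le> x - ?P" by simp
      then show "?P + ?c \<le> x" by (simp add: le_diff_eq add.commute)
    qed
    then have "?P + ?c \<le> ?P" using cSup_upper[OF _ bd] by blast
    then show ?thesis using c0 by simp
  qed
  then show ?thesis using PB P0 Px by blast
qed



definition BinfS :: "'a::{ordered_real_vector,conditionally_complete_lattice} set \<Rightarrow> 'a set" where
  "BinfS J = {z. \<forall>n::nat. real n *\<^sub>R rabs z \<in> J}"

lemma BinfS_real:
  fixes J :: "'a::{ordered_real_vector,conditionally_complete_lattice} set"
  assumes "CL J" "z \<in> BinfS J" shows "r *\<^sub>R rabs z \<in> J"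
proof -
  obtain m :: nat where m: "r \<le> real m" using real_arch_simple by blast
  have "real m *\<^sub>R rabs z \<in> J" using assms(2) by (simp add: BinfS_def)
  moreover have "r *\<^sub>R rabs z \<le> real m *\<^sub>R rabs z" using m rabs_nonneg by (rule scaleR_right_mono)
  ultimately show ?thesis using CL_down[OF assms(1)] by blast
qed

lemma BinfS_realI:
  fixes J :: "'a::{ordered_real_vector,conditionally_complete_lattice} set"
  assumes "\<And>r. r \<ge> 0 \<Longrightarrow> r *\<^sub>R rabs z \<in> J" shows "z \<in> BinfS J"
  using assms by (simp add: BinfS_def)

lemma BinfS_band:
  fixes J :: "'a::{ordered_real_vector,conditionally_complete_lattice} set"
  assumes C: "CL J" and J0: "0 \<in> J" shows "is_band (BinfS J)"
proof -
  have rabs0: "rabs (0::'a) = 0" by (simp add: rabs_pos)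
  have zero: "0 \<in> BinfS J" using J0 by (simp add: BinfS_def rabs0)
  have add: "x + y \<in> BinfS J" if x: "x \<in> BinfS J" and y: "y \<in> BinfS J" for x y
  proof (rule BinfS_realI)
    fix r :: real assume r: "r \<ge> 0"
    let ?u = "(2*r) *\<^sub>R rabs x" and ?v = "(2*r) *\<^sub>R rabs y"
    have s: "sup ?u ?v \<in> J" using CL_sup[OF C BinfS_real[OF C x] BinfS_real[OF C y]] .
    have "r *\<^sub>R rabs (x + y) \<le> r *\<^sub>R (rabs x + rabs y)" using r rabs_add by (rule scaleR_left_mono[rotated])
    also have "\<dots> = (1/2::real) *\<^sub>R ?u + (1/2::real) *\<^sub>R ?v" by (simp add: scaleR_add_right)
    also have "\<dots> \<le> (1/2::real) *\<^sub>R sup ?u ?v + (1/2::real) *\<^sub>R sup ?u ?v"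
      by (intro add_mono scaleR_left_mono) auto
    also have "\<dots> = sup ?u ?v" by (simp add: scaleR_add_left[symmetric])
    finally show "r *\<^sub>R rabs (x + y) \<in> J" using CL_down[OF C s] by blast
  qed
  have scale: "c *\<^sub>R x \<in> BinfS J" if x: "x \<in> BinfS J" for c x
  proof (rule BinfS_realI)
    fix r :: real assume r: "r \<ge> 0"
    have "r *\<^sub>R rabs (c *\<^sub>R x) \<le> r *\<^sub>R (\<bar>c\<bar> *\<^sub>R rabs x)" using r rabs_scale by (rule scaleR_left_mono[rotated])
    also have "\<dots> = (r * \<bar>c\<bar>) *\<^sub>R rabs x" by simp
    finally show "r *\<^sub>R rabs (c *\<^sub>R x) \<in> J" using CL_down[OF C BinfS_real[OF C x]] by blast
  qed
  have solid: "y \<in> BinfS J" if x: "x \<in> BinfS J" and le: "rabs y \<le> rabs x" for x y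
  proof (rule BinfS_realI)
    fix r :: real assume r: "r \<ge> 0"
    have "r *\<^sub>R rabs y \<le> r *\<^sub>R rabs x" using le r by (rule scaleR_left_mono)
    then show "r *\<^sub>R rabs y \<in> J" using CL_down[OF C BinfS_real[OF C x]] by blast
  qed
  have ideal: "is_ideal (BinfS J)"
    unfolding is_ideal_def using zero add scale solid by blast
  have band: "Sup D \<in> BinfS J" if D: "D \<subseteq> BinfS J" "D \<noteq> {}" "bdd_above D" for D
  proof (rule BinfS_realI)
    fix r :: real assume r: "r \<ge> 0"
    obtain d0 where d0: "d0 \<in> D" using D(2) by blast
    have pos: "r *\<^sub>R Sup D \<in> J"
    proof (cases "r = 0")
      case True then show ?thesis using J0 by simp
    next
      case False
      then have r0: "0 < r" using r by simp
      have "r *\<^sub>R Sup D = (SUP d\<in>D. r *\<^sub>R d)"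
        using SUP_scaleR_pos[OF D(2) _ r0, of id] D(3) by simp
      also have "\<dots> \<in> J"
      proof (rule CL_SUP[OF C _ D(2)])
        fix d assume d: "d \<in> D"
        have "r *\<^sub>R d \<le> r *\<^sub>R rabs d" using r rabs_ge1 by (rule scaleR_left_mono[rotated])
        then show "r *\<^sub>R d \<in> J" using CL_down[OF C BinfS_real[OF C]] d D(1) by blast
      next
        obtain M where M: "\<And>d. d \<in> D \<Longrightarrow> d \<le> M" using D(3) by (auto simp: bdd_above_def)
        show "bdd_above ((\<lambda>d. r *\<^sub>R d) ` D)"
          by (rule bdd_aboveI[of _ "r *\<^sub>R M"]) (use M r in \<open>auto intro: scaleR_left_mono\<close>)
      qed
      finally show ?thesis .
    qed
    have neg: "r *\<^sub>R (- Sup D) \<in> J"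
    proof -
      have "- Sup D \<le> - d0" using cSup_upper[OF d0 D(3)] by simp
      also have "\<dots> \<le> rabs d0" by (rule rabs_ge2)
      finally have "r *\<^sub>R (- Sup D) \<le> r *\<^sub>R rabs d0" using r by (rule scaleR_left_mono)
      then show ?thesis using CL_down[OF C BinfS_real[OF C]] d0 D(1) by blast
    qed
    have "r *\<^sub>R rabs (Sup D) \<le> sup (r *\<^sub>R Sup D) (r *\<^sub>R (- Sup D))"
    proof (cases "r = 0")
      case True then show ?thesis by simp
    next
      case False
      then show ?thesis using r by (simp add: rabs_def scaleR_sup_pos)
    qed
    then show "r *\<^sub>R rabs (Sup D) \<in> J" using CL_down[OF C CL_sup[OF C pos neg]] by blast
  qed
  show ?thesis unfolding is_band_def using ideal band by blast
qed

lemma BinfS_mono: "J \<subseteq> K \<Longrightarrow> BinfS J \<subseteq> BinfS K"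
  by (auto simp: BinfS_def)

lemma BinfS_scale:
  fixes J :: "'a::{ordered_real_vector,conditionally_complete_lattice} set"
  assumes C: "CL J" and c: "0 < c" shows "BinfS ((\<lambda>w. c *\<^sub>R w) ` J) = BinfS J"
proof (intro set_eqI iffI)
  fix z assume z: "z \<in> BinfS ((\<lambda>w. c *\<^sub>R w) ` J)"
  show "z \<in> BinfS J"
  proof (rule BinfS_realI)
    fix r :: real assume r: "r \<ge> 0"
    obtain m :: nat where m: "r * c \<le> real m" using real_arch_simple by blast
    have "real m *\<^sub>R rabs z \<in> (\<lambda>w. c *\<^sub>R w) ` J" using z by (simp add: BinfS_def)
    then obtain v where v: "v \<in> J" "real m *\<^sub>R rabs z = c *\<^sub>R v" by blast
    have "v = (real m / c) *\<^sub>R rabs z" using v(2) c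
      by (metis divide_inverse_commute eq_vector_fraction_iff less_irrefl)
    moreover have "r \<le> real m / c" using m c by (simp add: pos_le_divide_eq)
    ultimately have "r *\<^sub>R rabs z \<le> v" using scaleR_right_mono[OF _ rabs_nonneg] by simp
    then show "r *\<^sub>R rabs z \<in> J" using CL_down[OF C v(1)] by blast
  qed
next
  fix z assume z: "z \<in> BinfS J"
  show "z \<in> BinfS ((\<lambda>w. c *\<^sub>R w) ` J)"
  proof (rule BinfS_realI)
    fix r :: real assume r: "r \<ge> 0"
    have "(r / c) *\<^sub>R rabs z \<in> J" by (rule BinfS_real[OF C z])
    moreover have "r *\<^sub>R rabs z = c *\<^sub>R ((r / c) *\<^sub>R rabs z)" using c by simp
    ultimately show "r *\<^sub>R rabs z \<in> (\<lambda>w. c *\<^sub>R w) ` J" by blast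
  qed
qed



lemma Xu_pos_iff:
  fixes u :: "'a::{ordered_real_vector,conditionally_complete_lattice} set set"
  shows "u \<in> Xu_pos \<longleftrightarrow> u \<in> Xs \<and> 0 \<in> Ip u \<and> (\<forall>z. 0 \<le> z \<and> (\<forall>n::nat. real n *\<^sub>R z \<in> Ip u) \<longrightarrow> z = 0)"
proof -
  have e: "(\<forall>n::nat. sc_le (emb (real n *\<^sub>R z)) u) \<longleftrightarrow> (\<forall>n::nat. real n *\<^sub>R z \<in> Ip u)"
    if "u \<in> Xs" for z using emb_le[OF that] by blast
  show ?thesis
  proof
    assume H: "u \<in> Xu_pos"
    then have uX: "u \<in> Xs" "0 \<in> Ip u" using Xs_pos_iff by (auto simp: Xu_pos_def)
    then show "u \<in> Xs \<and> 0 \<in> Ip u \<and> (\<forall>z. 0 \<le> z \<and> (\<forall>n::nat. real n *\<^sub>R z \<in> Ip u) \<longrightarrow> z = 0)"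
      using H e[OF uX(1)] by (auto simp: Xu_pos_def)
  next
    assume H: "u \<in> Xs \<and> 0 \<in> Ip u \<and> (\<forall>z. 0 \<le> z \<and> (\<forall>n::nat. real n *\<^sub>R z \<in> Ip u) \<longrightarrow> z = 0)"
    then have "u \<in> Xs_pos" using Xs_pos_iff by blast
    then show "u \<in> Xu_pos" using H e by (auto simp: Xu_pos_def)
  qed
qed

lemma Ip_sc_add_infty:
  fixes u :: "'a::{ordered_real_vector,conditionally_complete_lattice} set set"
  assumes "is_band B" "u \<in> Xs"
  shows "sc_add (infty B) u \<in> Xs" "Ip (sc_add (infty B) u) = Icl (sumset (Icl B) (Ip u))"
  using sc_add_Ip[OF infty_class(2)[OF band_ideal[OF assms(1)]] assms(2)]
    infty_class(3)[OF band_ideal[OF assms(1)]] by simp_all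

lemma perp_in:
  fixes w :: "'a::{ordered_real_vector,conditionally_complete_lattice}"
  assumes B: "is_band B" and K: "CL K" "0 \<in> K" and w0: "0 \<le> w"
    and perp: "\<forall>b\<in>B. inf w (rabs b) = 0" and w: "w \<in> Icl (sumset (Icl B) K)"
  shows "w \<in> K"
proof -
  let ?S = "sumset (Icl B) K"
  have neS: "?S \<noteq> {}"
  proof -
    obtain k b where "k \<in> K" "b \<in> B" using CL_ne[OF K(1)] band_ne[OF B] by blast
    then have "b + k \<in> ?S" using A_sub_Icl unfolding sumset_def by blast
    then show ?thesis by blast
  qed
  have "w = (SUP s\<in>?S. inf w s)" using w by (simp add: Icl_def phi_def)
  also have "\<dots> \<in> K"
  proof (rule CL_SUP[OF K(1) _ neS bdd_inf])
    fix s assume "s \<in> ?S"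
    then obtain a c where s: "s = a + c" "a \<in> Icl B" "c \<in> K" by (auto simp: sumset_def)
    have aB: "sup a 0 \<in> B" by (rule band_Icl_pos[OF B s(2)])
    have ra: "rabs (sup a 0) = sup a 0" by (rule rabs_pos) simp
    have wa: "inf w (sup a 0) = 0" using perp aB ra by metis
    have "a + c \<le> sup a 0 + sup c 0" by (intro add_mono) simp_all
    then have "inf w s \<le> inf w (sup a 0 + sup c 0)" using s(1) by (simp add: le_infI2)
    also have "\<dots> \<le> inf w (sup a 0) + inf w (sup c 0)" by (rule riesz_ineq[OF w0]) auto
    also have "\<dots> = inf w (sup c 0)" using wa by simp
    also have "\<dots> \<le> sup c 0" by simp
    finally show "inf w s \<in> K" using CL_down[OF K(1) CL_sup[OF K(1) s(3) K(2)]] by blast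
  qed
  finally show ?thesis .
qed

lemma decomp_unique:
  fixes u :: "'a::{ordered_real_vector,conditionally_complete_lattice} set set"
  assumes B: "is_band B" and u: "u \<in> Xu_pos" and p: "p = sc_add (infty B) u"
  shows "B = BinfS (Ip p)"
proof -
  have uX: "u \<in> Xs" and u0: "0 \<in> Ip u"
    and uA: "\<And>z. 0 \<le> z \<Longrightarrow> (\<And>n::nat. real n *\<^sub>R z \<in> Ip u) \<Longrightarrow> z = 0"
    using u Xu_pos_iff by blast+
  note KC = Ip_CL[OF uX]
  have Ip: "Ip p = Icl (sumset (Icl B) (Ip u))" using Ip_sc_add_infty[OF B uX] p by simp
  note I = band_ideal[OF B]
  show ?thesis
  proof (intro set_eqI iffI)
    fix z assume z: "z \<in> B"
    show "z \<in> BinfS (Ip p)" unfolding BinfS_def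
    proof (intro CollectI allI)
      fix n :: nat
      have "real n *\<^sub>R rabs z \<in> B" using z by (intro ideal_scale[OF I] ideal_rabs[OF I])
      then have "real n *\<^sub>R rabs z + 0 \<in> sumset (Icl B) (Ip u)"
        using u0 A_sub_Icl unfolding sumset_def by blast
      then show "real n *\<^sub>R rabs z \<in> Ip p" using Ip A_sub_Icl by simp
    qed
  next
    fix z assume z: "z \<in> BinfS (Ip p)"
    let ?x = "rabs z"
    obtain P where P: "P \<in> B" "0 \<le> P" "P \<le> ?x" "\<forall>b\<in>B. inf (?x - P) (rabs b) = 0"
      using band_proj[OF B rabs_nonneg] by blast
    have "?x - P = 0"
    proof (rule uA)
      show "0 \<le> ?x - P" using P by simp
      fix n :: nat
      have n0: "0 \<le> real n *\<^sub>R (?x - P)" using P by (simp add: scaleR_nonneg_nonneg)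
      have "real n *\<^sub>R (?x - P) \<le> real n *\<^sub>R ?x" using P by (simp add: scaleR_left_mono)
      moreover have "real n *\<^sub>R ?x \<in> Ip p" using z by (simp add: BinfS_def)
      ultimately have "real n *\<^sub>R (?x - P) \<in> Icl (sumset (Icl B) (Ip u))"
        using CL_down[OF Ip_CL[OF sc_add_Ip(1)[OF infty_class(2)[OF I] uX]]] p Ip by auto
      moreover have "\<forall>b\<in>B. inf (real n *\<^sub>R (?x - P)) (rabs b) = 0"
      proof
        fix b assume b: "b \<in> B"
        have "real n *\<^sub>R rabs b \<in> B" using b by (intro ideal_scale[OF I] ideal_rabs[OF I])
        have "inf (real n *\<^sub>R (?x - P)) (rabs b) \<le> real n *\<^sub>R inf (?x - P) (rabs b) + inf (real n *\<^sub>R (?x - P)) (rabs b)"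
          using P b by simp
        show "inf (real n *\<^sub>R (?x - P)) (rabs b) = 0"
        proof (cases "n = 0")
          case True then show ?thesis using rabs_nonneg[of b] by (simp add: inf.absorb1)
        next
          case False
          then have np: "0 < real n" by simp
          have "inf (real n *\<^sub>R (?x - P)) (rabs b) = real n *\<^sub>R inf (?x - P) ((1 / real n) *\<^sub>R rabs b)"
            using np by (simp add: scaleR_inf_pos)
          also have "rabs ((1 / real n) *\<^sub>R rabs b) = (1 / real n) *\<^sub>R rabs b"
            using np rabs_nonneg[of b] by (intro rabs_pos scaleR_nonneg_nonneg) auto
          then have "inf (?x - P) ((1 / real n) *\<^sub>R rabs b) = 0"
            using P(4) ideal_scale[OF I ideal_rabs[OF I b], of "1 / real n"] by metis
          finally show ?thesis by simp
        qed
      qed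
      ultimately show "real n *\<^sub>R (?x - P) \<in> Ip u"
        using perp_in[OF B KC u0 n0] by blast
    qed
    then have "?x \<in> B" using P(1) by simp
    moreover have "rabs z \<le> rabs ?x" by (simp add: rabs_rabs)
    ultimately show "z \<in> B" using ideal_solid[OF I, of ?x z] by blast
  qed
qed



lemma decomp_exists:
  fixes p :: "'a::{ordered_real_vector,conditionally_complete_lattice} set set"
  assumes pX: "p \<in> Xs" and p0: "0 \<in> Ip p"
  shows "\<exists>u. u \<in> Xu_pos \<and> sc_disj_band u (BinfS (Ip p)) \<and> p = sc_add (infty (BinfS (Ip p))) u"
proof -
  let ?J = "Ip p"
  let ?B = "BinfS ?J"
  note JC = Ip_CL[OF pX]
  have B: "is_band ?B" by (rule BinfS_band[OF JC p0])
  note I = band_ideal[OF B]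
  have BJ: "b \<in> ?J" if "b \<in> ?B" for b
  proof -
    have "real (1::nat) *\<^sub>R rabs b \<in> ?J" using that by (simp only: BinfS_def mem_Collect_eq)
    then have "rabs b \<in> ?J" by simp
    then show ?thesis using CL_down[OF JC] rabs_ge1 by blast
  qed
  define U where "U = {v. 0 \<le> v \<and> (\<forall>b\<in>?B. inf v (rabs b) = 0) \<and> v \<in> ?J}"
  have U0: "0 \<in> U" using p0 unfolding U_def by (auto intro: inf.absorb1 rabs_nonneg)
  have neU: "U \<noteq> {}" using U0 by blast
  have UJ: "U \<subseteq> ?J" by (auto simp: U_def)
  have Usup: "sup v1 v2 \<in> U" if "v1 \<in> U" "v2 \<in> U" for v1 v2
  proof -
    have v: "0 \<le> v1" "0 \<le> v2" "v1 \<in> ?J" "v2 \<in> ?J" "\<forall>b\<in>?B. inf v1 (rabs b) = 0" "\<forall>b\<in>?B. inf v2 (rabs b) = 0"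
      using that by (auto simp: U_def)
    have "inf (sup v1 v2) (rabs b) = 0" if b: "b \<in> ?B" for b
    proof (rule antisym)
      have "sup v1 v2 \<le> v1 + v2" using v(1,2) by (auto intro: add_increasing add_increasing2)
      then have "inf (sup v1 v2) (rabs b) \<le> inf (rabs b) (v1 + v2)"
        by (metis inf.commute inf_mono order_refl)
      also have "\<dots> \<le> inf (rabs b) v1 + inf (rabs b) v2" using v(1,2) rabs_nonneg by (intro riesz_ineq) auto
      also have "\<dots> = 0" using v(5,6) b by (simp add: inf.commute)
      finally show "inf (sup v1 v2) (rabs b) \<le> 0" .
      show "0 \<le> inf (sup v1 v2) (rabs b)" using v(1) rabs_nonneg[of b] by (simp add: le_supI1)
    qed
    then show ?thesis using v CL_sup[OF JC v(3,4)] by (auto simp: U_def le_supI1)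
  qed
  have UU: "updir U"
    unfolding updir_def using neU Usup by (meson sup.cobounded1 sup.cobounded2)
  define u where "u = sc_class U"
  have uX: "u \<in> Xs" using class_in_Xs[OF UU] by (simp add: u_def)
  have Ipu: "Ip u = Icl U" using Ip_class[OF UU] by (simp add: u_def)
  have IclUJ: "Icl U \<subseteq> ?J" by (rule Icl_sub[OF neU JC UJ])
  have Uperp: "inf z (rabs b) = 0" if z: "z \<in> Icl U" "0 \<le> z" and b: "b \<in> ?B" for z b
  proof -
    have "inf (rabs b) z = inf (rabs b) (SUP v\<in>U. inf z v)" using z(1) by (simp add: Icl_def phi_def)
    also have "\<dots> = (SUP v\<in>U. inf (rabs b) (inf z v))" by (rule SUP_inf_distrib[OF neU bdd_inf])
    also have "\<dots> = (SUP v\<in>U. inf z 0)"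
    proof (rule SUP_cong[OF refl])
      fix v assume "v \<in> U"
      then have "inf v (rabs b) = 0" using b by (simp add: U_def)
      then show "inf (rabs b) (inf z v) = inf z 0" by (metis inf.assoc inf.commute)
    qed
    also have "\<dots> = 0" using neU z(2) by (simp add: inf.absorb2)
    finally show ?thesis by (simp add: inf.commute)
  qed
  have uXu: "u \<in> Xu_pos"
    unfolding Xu_pos_iff
  proof (intro conjI allI impI)
    show "u \<in> Xs" by (rule uX)
    show "0 \<in> Ip u" using Ipu U0 A_sub_Icl by blast
    fix z assume z: "0 \<le> z \<and> (\<forall>n::nat. real n *\<^sub>R z \<in> Ip u)"
    then have "z \<in> ?B" using IclUJ Ipu rabs_pos[of z] by (auto simp: BinfS_def)
    moreover have "z \<in> Icl U" using z Ipu by (metis of_nat_1 scaleR_one)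
    ultimately have "inf z (rabs z) = 0" using Uperp z by blast
    then show "z = 0" using z rabs_pos[of z] by simp
  qed
  have disj: "sc_disj_band u ?B"
    unfolding sc_disj_band_def
  proof
    fix b assume b: "b \<in> ?B"
    have ie: "Ip (sc_inf u (emb (rabs b))) = Icl U \<inter> {v. v \<le> rabs b}"
      using sc_inf_Ip(3)[OF uX Ip_emb(2)[of "rabs b"]] Ipu Ip_emb(1)[of "rabs b"] by simp
    have "Icl U \<inter> {v. v \<le> rabs b} = {v. v \<le> 0}"
    proof (intro set_eqI iffI)
      fix w assume w: "w \<in> Icl U \<inter> {v. v \<le> rabs b}"
      have "w = (SUP v\<in>U. inf w v)" using w by (simp add: Icl_def phi_def)
      also have "\<dots> \<le> 0"
      proof (rule cSUP_least[OF neU])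
        fix v assume v: "v \<in> U"
        have "inf w v \<le> inf (rabs b) v" using w by (simp add: le_infI1)
        also have "\<dots> = 0" using v b by (simp add: U_def inf.commute)
        finally show "inf w v \<le> 0" .
      qed
      finally show "w \<in> {v. v \<le> 0}" by simp
    next
      fix w assume "w \<in> {v::'a. v \<le> 0}"
      then have w: "w \<le> 0" by simp
      have "w \<in> Icl U" using Icl_down[OF neU A_sub_Icl[OF U0] w] .
      moreover have "w \<le> rabs b" using w rabs_nonneg[of b] by simp
      ultimately show "w \<in> Icl U \<inter> {v. v \<le> rabs b}" by simp
    qed
    then have "Ip (sc_inf u (emb (rabs b))) = Ip (emb 0)" using ie Ip_emb(1)[of "0::'a"] by simp
    then show "sc_inf u (emb (rabs b)) = sc_zero"
      unfolding sc_zero_def by (rule Xs_eq[OF sc_inf_Ip(2)[OF uX Ip_emb(2)] Ip_emb(2)])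
  qed
  have sum: "p = sc_add (infty ?B) u"
  proof (rule Xs_eq[OF pX Ip_sc_add_infty(1)[OF B uX]])
    let ?S = "sumset (Icl ?B) (Ip u)"
    have "0 + 0 \<in> ?S" using A_sub_Icl[OF U0] A_sub_Icl[OF ideal_zero[OF I]] Ipu unfolding sumset_def by blast
    then have neS: "?S \<noteq> {}" by blast
    show "Ip p = Ip (sc_add (infty ?B) u)"
      unfolding Ip_sc_add_infty(2)[OF B uX]
    proof (rule antisym)
      show "?J \<subseteq> Icl ?S"
      proof
        fix w assume w: "w \<in> ?J"
        let ?x = "sup w 0"
        have x: "?x \<in> ?J" using CL_sup[OF JC w p0] .
        obtain P where P: "P \<in> ?B" "0 \<le> P" "P \<le> ?x" "\<forall>b\<in>?B. inf (?x - P) (rabs b) = 0"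
          using band_proj[OF B, of ?x] by auto
        have "?x - P \<le> ?x" using P(2) by simp
        then have "?x - P \<in> ?J" using CL_down[OF JC x] by blast
        then have "?x - P \<in> U" unfolding U_def using P(3,4) by simp
        then have "P + (?x - P) \<in> ?S" using P(1) A_sub_Icl Ipu unfolding sumset_def by blast
        then have "?x \<in> Icl ?S" using A_sub_Icl by simp
        then show "w \<in> Icl ?S" by (rule Icl_down[OF neS]) simp
      qed
      show "Icl ?S \<subseteq> ?J"
      proof (rule Icl_sub[OF neS JC])
        show "?S \<subseteq> ?J"
        proof
          fix s assume "s \<in> ?S"
          then obtain a c where s: "s = a + c" "a \<in> Icl ?B" "c \<in> Icl U" using Ipu by (auto simp: sumset_def)
          let ?a = "sup a 0"
          have aB: "?a \<in> ?B" by (rule band_Icl_pos[OF B s(2)])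
          have ra: "rabs ?a = ?a" by (rule rabs_pos) simp
          have aJ: "?a \<in> ?J" using BJ[OF aB] .
          have "?a + c = ?a + (SUP v\<in>U. inf c v)" using s(3) by (simp add: Icl_def phi_def)
          also have "\<dots> = (SUP v\<in>U. ?a + inf c v)" by (rule SUP_translate[OF neU bdd_inf])
          also have "\<dots> \<in> ?J"
          proof (rule CL_SUP[OF JC _ neU])
            fix v assume v: "v \<in> U"
            have "inf v (rabs ?a) = 0" using v aB by (simp add: U_def)
            then have "inf ?a v = 0" using ra by (simp add: inf.commute)
            then have e1: "?a + v = sup ?a v" by (rule disj_add_sup)
            have "?a + inf c v \<le> ?a + v" by (simp add: add_left_mono)
            then have le: "?a + inf c v \<le> sup ?a v" using e1 by simp
            have "sup ?a v \<in> ?J" using CL_sup[OF JC aJ] v UJ by blast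
            then show "?a + inf c v \<in> ?J" using CL_down[OF JC _ le] by blast
          next
            show "bdd_above ((\<lambda>v. ?a + inf c v) ` U)"
              by (rule bdd_aboveI[of _ "?a + c"]) (auto intro: add_left_mono)
          qed
          finally have "?a + c \<in> ?J" .
          moreover have "s \<le> ?a + c" using s(1) by (simp add: add_right_mono)
          ultimately show "s \<in> ?J" using CL_down[OF JC] by blast
        qed
      qed
    qed
  qed
  show ?thesis using uXu disj sum by blast
qed

lemma inf_part_eq:
  fixes p :: "'a::{ordered_real_vector,conditionally_complete_lattice} set set"
  assumes "p \<in> Xs_pos"
  shows "inf_part p = infty (BinfS (Ip p))"
proof -
  have pX: "p \<in> Xs" and p0: "0 \<in> Ip p" using assms Xs_pos_iff by blast+
  have B: "is_band (BinfS (Ip p))" by (rule BinfS_band[OF Ip_CL[OF pX] p0])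
  obtain u where u: "u \<in> Xu_pos" "sc_disj_band u (BinfS (Ip p))" "p = sc_add (infty (BinfS (Ip p))) u"
    using decomp_exists[OF pX p0] by blast
  show ?thesis
    unfolding inf_part_def
  proof (rule the_equality)
    show "\<exists>B u. is_band B \<and> u \<in> Xu_pos \<and> sc_disj_band u B \<and> p = sc_add (infty B) u \<and>
        infty (BinfS (Ip p)) = infty B" using B u by blast
    fix c assume "\<exists>B u. is_band B \<and> u \<in> Xu_pos \<and> sc_disj_band u B \<and> p = sc_add (infty B) u \<and> c = infty B"
    then obtain B' u' where H: "is_band B'" "u' \<in> Xu_pos" "p = sc_add (infty B') u'" "c = infty B'" by blast
    have "B' = BinfS (Ip p)" by (rule decomp_unique[OF H(1,2,3)])
    then show "c = infty (BinfS (Ip p))" using H(4) by simp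
  qed
qed



lemma inf_sup_fin:
  fixes w a b :: "'a::{ordered_ab_group_add,conditionally_complete_lattice}"
  shows "inf w (sup a b) = sup (inf w a) (inf w b)"
proof -
  have "inf w (SUP i\<in>{a,b}. i) = (SUP i\<in>{a,b}. inf w i)"
    by (rule SUP_inf_distrib) auto
  then show ?thesis by (simp add: cSup_insert)
qed

lemma disj_mult:
  fixes r b :: "'a::{ordered_real_vector,lattice}"
  assumes "0 \<le> r" "0 \<le> b" "inf r b = 0"
  shows "inf (real n *\<^sub>R r) b = 0"
proof (induction n)
  case 0 then show ?case using assms(2) by (simp add: inf.absorb1)
next
  case (Suc n)
  have nr: "0 \<le> real n *\<^sub>R r" using assms(1) by (simp add: scaleR_nonneg_nonneg)
  have "inf (real (Suc n) *\<^sub>R r) b = inf b (r + real n *\<^sub>R r)"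
    by (simp add: inf.commute scaleR_add_left algebra_simps)
  also have "\<dots> \<le> inf b r + inf b (real n *\<^sub>R r)" by (rule riesz_ineq[OF assms(2,1) nr])
  also have "\<dots> = 0" using Suc assms(3) by (simp add: inf.commute)
  finally show ?case using nr assms(1,2)
    by (metis antisym le_inf_iff scaleR_nonneg_nonneg of_nat_0_le_iff)
qed

lemma phi_nonneg:
  fixes K :: "'a::{ordered_ab_group_add,conditionally_complete_lattice} set"
  assumes "0 \<in> K" "0 \<le> x" shows "0 \<le> phi K x"
  using phi_ge[OF assms(1), of x] assms(2) by (simp add: inf.absorb2)

lemma arch_lemma_one:
  fixes r :: "'a::{ordered_real_vector,conditionally_complete_lattice}"
  assumes K: "CL K" "0 \<in> K" and Xu: "\<And>z. 0 \<le> z \<Longrightarrow> (\<And>n::nat. real n *\<^sub>R z \<in> K) \<Longrightarrow> z = 0"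
    and r0: "0 \<le> r"
    and a_def: "a = (\<lambda>n::nat. (1 / real (Suc n)) *\<^sub>R phi K (real (Suc n) *\<^sub>R r))"
  shows "\<And>n. 0 \<le> a n" "decseq a" "Inf (range a) = 0"
proof -
  have neK: "K \<noteq> {}" using K(2) by blast
  have IK: "Icl K = K" by (rule CL_Icl[OF K(1)])
  have phiK: "phi K x \<in> K" for x using phi_in[OF neK] IK by simp
  show a0: "0 \<le> a n" for n
    unfolding a_def using r0 phi_nonneg[OF K(2)] by (simp add: scaleR_nonneg_nonneg)
  have step: "a (Suc n) \<le> a n" for n
  proof -
    let ?m = "real (Suc n)" and ?m' = "real (Suc (Suc n))"
    let ?f = "phi K (?m' *\<^sub>R r)"
    let ?v = "(?m / ?m') *\<^sub>R ?f"
    have f0: "0 \<le> ?f" using r0 phi_nonneg[OF K(2)] by (simp add: scaleR_nonneg_nonneg)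
    have "?v \<le> 1 *\<^sub>R ?f" using f0 by (intro scaleR_right_mono) auto
    then have vK: "?v \<in> K" using CL_down[OF K(1) phiK] by simp
    have "?f \<le> ?m' *\<^sub>R r" using phi_le[OF neK] .
    then have "?v \<le> (?m / ?m') *\<^sub>R (?m' *\<^sub>R r)" by (intro scaleR_left_mono) auto
    also have "\<dots> = ?m *\<^sub>R r" by simp
    finally have "?v \<le> phi K (?m *\<^sub>R r)" using phi_max[OF neK] vK IK by simp
    then have "(1 / ?m) *\<^sub>R ?v \<le> (1 / ?m) *\<^sub>R phi K (?m *\<^sub>R r)" by (intro scaleR_left_mono) auto
    moreover have "(1 / ?m) *\<^sub>R ?v = (1 / ?m') *\<^sub>R ?f" by simp
    ultimately show ?thesis unfolding a_def by simp
  qed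
  show dec: "decseq a" by (rule decseq_SucI) (rule step)
  have bdd: "bdd_below (range a)" by (rule bdd_belowI[of _ 0]) (auto intro: a0)
  let ?t = "Inf (range a)"
  have t0: "0 \<le> ?t" by (rule cINF_greatest) (auto intro: a0)
  have "real k *\<^sub>R ?t \<in> K" for k :: nat
  proof (cases k)
    case 0 then show ?thesis using K(2) by simp
  next
    case (Suc j)
    have "?t \<le> a j" by (rule cINF_lower[OF bdd]) simp
    then have "real k *\<^sub>R ?t \<le> real k *\<^sub>R a j" by (intro scaleR_left_mono) auto
    also have "\<dots> = phi K (real k *\<^sub>R r)" using Suc by (simp add: a_def)
    finally show ?thesis using CL_down[OF K(1) phiK] by blast
  qed
  then show "Inf (range a) = 0" using Xu t0 by blast
qed

lemma arch_lemma:
  fixes r :: "'a::{ordered_real_vector,conditionally_complete_lattice}"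
  assumes K: "CL K" "0 \<in> K" and XuK: "\<And>z. 0 \<le> z \<Longrightarrow> (\<And>n::nat. real n *\<^sub>R z \<in> K) \<Longrightarrow> z = 0"
    and L: "CL L" "0 \<in> L" and XuL: "\<And>z. 0 \<le> z \<Longrightarrow> (\<And>n::nat. real n *\<^sub>R z \<in> L) \<Longrightarrow> z = 0"
    and r0: "0 \<le> r"
    and H: "\<And>n::nat. real n *\<^sub>R r \<le> sup (phi K (real n *\<^sub>R r)) (phi L (real n *\<^sub>R r))"
  shows "r = 0"
proof -
  define a where "a = (\<lambda>n::nat. (1 / real (Suc n)) *\<^sub>R phi K (real (Suc n) *\<^sub>R r))"
  define b where "b = (\<lambda>n::nat. (1 / real (Suc n)) *\<^sub>R phi L (real (Suc n) *\<^sub>R r))"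
  note A = arch_lemma_one[OF K XuK r0 a_def]
  note B = arch_lemma_one[OF L XuL r0 b_def]
  have rab: "r \<le> a n + b n" for n
  proof -
    let ?m = "real (Suc n)"
    have "?m *\<^sub>R r \<le> sup (phi K (?m *\<^sub>R r)) (phi L (?m *\<^sub>R r))" by (rule H)
    then have "(1 / ?m) *\<^sub>R (?m *\<^sub>R r) \<le> (1 / ?m) *\<^sub>R sup (phi K (?m *\<^sub>R r)) (phi L (?m *\<^sub>R r))"
      by (intro scaleR_left_mono) auto
    also have "\<dots> = sup (a n) (b n)" unfolding a_def b_def by (rule scaleR_sup_pos) simp
    also have "\<dots> \<le> a n + b n" using A(1) B(1) by (auto intro: sup_least add_increasing add_increasing2)
    finally show ?thesis by simp
  qed
  have rij: "r \<le> a i + b j" for i j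
  proof -
    have "r \<le> a (max i j) + b (max i j)" by (rule rab)
    also have "\<dots> \<le> a i + b j"
      using A(2) B(2) by (intro add_mono) (auto simp: decseq_def)
    finally show ?thesis .
  qed
  have bddA: "bdd_below (range a)" by (rule bdd_belowI[of _ 0]) (auto intro: A(1))
  have bddB: "bdd_below (range b)" by (rule bdd_belowI[of _ 0]) (auto intro: B(1))
  have "r \<le> b j" for j
  proof -
    have "r - b j \<le> Inf (range a)"
      by (rule cINF_greatest) (use rij in \<open>auto simp: diff_le_eq\<close>)
    then show ?thesis using A(3) by simp
  qed
  then have "r \<le> Inf (range b)" by (intro cINF_greatest) auto
  then show ?thesis using B(3) r0 by simp
qed



lemma Xs_pos_facts:
  fixes x :: "'a::{ordered_real_vector,conditionally_complete_lattice} set set"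
  assumes "x \<in> Xs_pos"
  shows "x \<in> Xs" "0 \<in> Ip x" "is_band (BinfS (Ip x))" "infty (BinfS (Ip x)) \<in> Xs"
    "Ip (infty (BinfS (Ip x))) = Icl (BinfS (Ip x))" "inf_part x = infty (BinfS (Ip x))"
proof -
  show xX: "x \<in> Xs" and x0: "0 \<in> Ip x" using assms Xs_pos_iff by blast+
  show B: "is_band (BinfS (Ip x))" by (rule BinfS_band[OF Ip_CL[OF xX] x0])
  show "infty (BinfS (Ip x)) \<in> Xs" "Ip (infty (BinfS (Ip x))) = Icl (BinfS (Ip x))"
    using infty_class[OF band_ideal[OF B]] by simp_all
  show "inf_part x = infty (BinfS (Ip x))" by (rule inf_part_eq[OF assms])
qed

lemma part_mono:
  fixes x y :: "'a::{ordered_real_vector,conditionally_complete_lattice} set set"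
  assumes x: "x \<in> Xs_pos" and y: "y \<in> Xs_pos" and le: "sc_le x y"
  shows "sc_le (inf_part x) (inf_part y)"
proof -
  note X = Xs_pos_facts[OF x] and Y = Xs_pos_facts[OF y]
  have "Ip x \<subseteq> Ip y" using sc_le_iff[OF X(1) Y(1)] le by simp
  then have "BinfS (Ip x) \<subseteq> BinfS (Ip y)" by (rule BinfS_mono)
  then have "BinfS (Ip x) \<subseteq> Icl (BinfS (Ip y))" using A_sub_Icl by blast
  then have "Icl (BinfS (Ip x)) \<subseteq> Icl (BinfS (Ip y))"
    by (rule Icl_sub[OF band_ne[OF X(3)] Icl_CL[OF band_ne[OF Y(3)]]])
  then show ?thesis using sc_le_iff[OF X(4) Y(4)] X(5,6) Y(5,6) by simp
qed

lemma part_inf: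
  fixes x y :: "'a::{ordered_real_vector,conditionally_complete_lattice} set set"
  assumes x: "x \<in> Xs_pos" and y: "y \<in> Xs_pos"
  shows "inf_part (sc_inf x y) = sc_inf (inf_part x) (inf_part y)"
proof -
  note X = Xs_pos_facts[OF x] and Y = Xs_pos_facts[OF y]
  note I = sc_inf_Ip[OF X(1) Y(1)]
  have ip: "sc_inf x y \<in> Xs_pos" using I X(2) Y(2) Xs_pos_iff by auto
  note Z = Xs_pos_facts[OF ip]
  have BZ: "BinfS (Ip (sc_inf x y)) = BinfS (Ip x) \<inter> BinfS (Ip y)"
    using I(3) by (auto simp: BinfS_def)
  note R = sc_inf_Ip[OF X(4) Y(4)]
  have "Icl (BinfS (Ip (sc_inf x y))) = Icl (BinfS (Ip x)) \<inter> Icl (BinfS (Ip y))"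
    using band_Icl_iff[OF Z(3)] band_Icl_iff[OF X(3)] band_Icl_iff[OF Y(3)] BZ by blast
  then have "Ip (inf_part (sc_inf x y)) = Ip (sc_inf (inf_part x) (inf_part y))"
    using Z(5,6) X(5,6) Y(5,6) R(3) by simp
  then show ?thesis using Xs_eq Z(4,6) X(6) Y(6) R(2) by metis
qed

lemma Icl_band_scale:
  fixes B :: "'a::{ordered_real_vector,conditionally_complete_lattice} set"
  assumes B: "is_band B" and c: "0 < c"
  shows "(\<lambda>w. c *\<^sub>R w) ` Icl B = Icl B"
proof -
  have sc: "d *\<^sub>R w \<in> Icl B" if "w \<in> Icl B" "0 < d" for w d
  proof -
    have "sup w 0 \<in> B" using that(1) band_Icl_iff[OF B] by blast
    then have "d *\<^sub>R sup w 0 \<in> B" by (rule ideal_scale[OF band_ideal[OF B]])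
    moreover have "d *\<^sub>R sup w 0 = sup (d *\<^sub>R w) 0" using scaleR_sup_pos[OF that(2), of w 0] by simp
    ultimately show ?thesis using band_Icl_iff[OF B] by simp
  qed
  show ?thesis
  proof (intro set_eqI iffI)
    fix w assume "w \<in> (\<lambda>w. c *\<^sub>R w) ` Icl B"
    then show "w \<in> Icl B" using sc c by blast
  next
    fix w assume w: "w \<in> Icl B"
    have "(1/c) *\<^sub>R w \<in> Icl B" using sc[OF w] c by simp
    moreover have "w = c *\<^sub>R ((1/c) *\<^sub>R w)" using c by simp
    ultimately show "w \<in> (\<lambda>w. c *\<^sub>R w) ` Icl B" by blast
  qed
qed

lemma part_scale:
  fixes x :: "'a::{ordered_real_vector,conditionally_complete_lattice} set set"
  assumes x: "x \<in> Xs_pos" and c: "0 \<le> c"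
  shows "inf_part (sc_scale c x) = sc_scale c (inf_part x)"
proof (cases "c = 0")
  case True
  note X = Xs_pos_facts[OF x]
  have e1: "sc_scale c x = emb 0" using True sc_scale_zero[OF X(1)] by simp
  have e2: "sc_scale c (inf_part x) = emb 0" using True sc_scale_zero[OF X(4)] X(6) by simp
  have ep: "emb (0::'a) \<in> Xs_pos" unfolding Xs_pos_iff using Ip_emb(1)[of "0::'a"] Ip_emb(2)[of "0::'a"] by simp
  note Z = Xs_pos_facts[OF ep]
  have "Icl (BinfS (Ip (emb (0::'a)))) = {v. v \<le> 0}"
  proof (intro set_eqI iffI)
    fix w assume "w \<in> Icl (BinfS (Ip (emb (0::'a))))"
    then have "sup w 0 \<in> BinfS (Ip (emb 0))" using band_Icl_iff[OF Z(3)] by blast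
    then have "real (1::nat) *\<^sub>R rabs (sup w 0) \<in> Ip (emb 0)" unfolding BinfS_def by blast
    then have "rabs (sup w 0) \<le> 0" using Ip_emb(1)[of "0::'a"] by simp
    then have "sup w 0 = 0" by (rule rabs_le0)
    then show "w \<in> {v. v \<le> 0}" by (metis mem_Collect_eq sup.orderI sup_commute)
  next
    fix w :: 'a assume "w \<in> {v. v \<le> 0}"
    then have "sup w 0 = 0" by (simp add: sup.absorb2)
    then have "sup w 0 \<in> BinfS (Ip (emb 0))"
      unfolding BinfS_def using Ip_emb(1)[of "0::'a"] rabs_pos[of "0::'a"] by simp
    then show "w \<in> Icl (BinfS (Ip (emb (0::'a))))" using band_Icl_iff[OF Z(3)] by blast
  qed
  then have "Ip (inf_part (emb (0::'a))) = Ip (emb 0)" using Z(5,6) Ip_emb(1)[of "0::'a"] by simp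
  then have "inf_part (emb (0::'a)) = emb 0" using Xs_eq Z(4,6) Ip_emb(2) by metis
  then show ?thesis using e1 e2 by simp
next
  case False
  then have c0: "0 < c" using c by simp
  note X = Xs_pos_facts[OF x]
  note S = sc_scale_pos[OF X(1) c0]
  have sp: "sc_scale c x \<in> Xs_pos" using S X(2) Xs_pos_iff by (metis image_eqI scaleR_zero_right)
  note Z = Xs_pos_facts[OF sp]
  have BZ: "BinfS (Ip (sc_scale c x)) = BinfS (Ip x)"
    using S(2) BinfS_scale[OF Ip_CL[OF X(1)] c0] by simp
  note R = sc_scale_pos[OF X(4) c0]
  have "Ip (inf_part (sc_scale c x)) = Ip (sc_scale c (inf_part x))"
    using Z(5,6) R(2) X(5,6) BZ Icl_band_scale[OF X(3) c0] by simp
  then show ?thesis using Xs_eq Z(4,6) R(1) X(6) by metis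
qed



lemma two_sup: "(a::'a::{ordered_real_vector,lattice}) + b \<le> (2::real) *\<^sub>R sup a b"
  by (simp add: scaleR_2 add_mono)

lemma sup_le_sum_pos: "sup (a::'a::{ordered_real_vector,lattice}) b \<le> sup a 0 + sup b 0"
proof (rule sup_least)
  show "a \<le> sup a 0 + sup b 0" by (rule order_trans[OF sup_ge1 [of a 0]]) (simp add: add_increasing2)
  show "b \<le> sup a 0 + sup b 0" by (rule order_trans[OF sup_ge1 [of b 0]]) (simp add: add_increasing)
qed

lemma sup_facts:
  fixes x y :: "'a::{ordered_real_vector,conditionally_complete_lattice} set set"
  assumes x: "x \<in> Xs_pos" and y: "y \<in> Xs_pos"
  shows "sc_sup x y \<in> Xs_pos" "Ip x \<subseteq> Ip (sc_sup x y)" "Ip y \<subseteq> Ip (sc_sup x y)"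
proof -
  note X = Xs_pos_facts[OF x] and Y = Xs_pos_facts[OF y]
  note S = sc_sup_Ip[OF X(1) Y(1)]
  have ne: "supS (Ip x) (Ip y) \<noteq> {}" using X(2) Y(2) by (auto simp: supS_def)
  have "sup 0 0 \<in> supS (Ip x) (Ip y)" using X(2) Y(2) unfolding supS_def by blast
  then have "0 \<in> Ip (sc_sup x y)" using S(3) A_sub_Icl[OF \<open>sup 0 0 \<in> supS (Ip x) (Ip y)\<close>] by simp
  then show "sc_sup x y \<in> Xs_pos" using S(2) Xs_pos_iff by blast
  show "Ip x \<subseteq> Ip (sc_sup x y)"
  proof
    fix a assume a: "a \<in> Ip x"
    have "sup a 0 \<in> supS (Ip x) (Ip y)" using a Y(2) unfolding supS_def by blast
    then have "sup a 0 \<in> Ip (sc_sup x y)" using S(3) A_sub_Icl by simp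
    then show "a \<in> Ip (sc_sup x y)" by (rule CL_down[OF Ip_CL[OF S(2)]]) simp
  qed
  show "Ip y \<subseteq> Ip (sc_sup x y)"
  proof
    fix b assume b: "b \<in> Ip y"
    have "sup 0 b \<in> supS (Ip x) (Ip y)" using b X(2) unfolding supS_def by blast
    then have "sup 0 b \<in> Ip (sc_sup x y)" using S(3) A_sub_Icl by simp
    then show "b \<in> Ip (sc_sup x y)" by (rule CL_down[OF Ip_CL[OF S(2)]]) simp
  qed
qed

lemma binf_add_eq_sup:
  fixes x y :: "'a::{ordered_real_vector,conditionally_complete_lattice} set set"
  assumes x: "x \<in> Xs_pos" and y: "y \<in> Xs_pos"
  shows "sc_add x y \<in> Xs_pos" "BinfS (Ip (sc_add x y)) = BinfS (Ip (sc_sup x y))"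
proof -
  note X = Xs_pos_facts[OF x] and Y = Xs_pos_facts[OF y]
  note S = sc_sup_Ip[OF X(1) Y(1)] and A = sc_add_Ip[OF X(1) Y(1)]
  note CS = Ip_CL[OF S(2)] and CA = Ip_CL[OF A(1)]
  have "sup 0 0 \<in> supS (Ip x) (Ip y)" using X(2) Y(2) unfolding supS_def by blast
  then have neS: "supS (Ip x) (Ip y) \<noteq> {}" by blast
  have "0 + 0 \<in> sumset (Ip x) (Ip y)" using X(2) Y(2) unfolding sumset_def by blast
  then have neA: "sumset (Ip x) (Ip y) \<noteq> {}" by blast
  have "0 \<in> Ip (sc_add x y)" using A(2) A_sub_Icl[OF \<open>0 + 0 \<in> sumset (Ip x) (Ip y)\<close>] by simp
  then show "sc_add x y \<in> Xs_pos" using A(1) Xs_pos_iff by blast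
  have SA: "Ip (sc_sup x y) \<subseteq> Ip (sc_add x y)"
  proof -
    have "supS (Ip x) (Ip y) \<subseteq> Ip (sc_add x y)"
    proof
      fix s assume "s \<in> supS (Ip x) (Ip y)"
      then obtain a b where s: "s = sup a b" "a \<in> Ip x" "b \<in> Ip y" by (auto simp: supS_def)
      have "sup a 0 + sup b 0 \<in> sumset (Ip x) (Ip y)"
        using CL_sup[OF Ip_CL[OF X(1)] s(2) X(2)] CL_sup[OF Ip_CL[OF Y(1)] s(3) Y(2)]
        unfolding sumset_def by blast
      then have "sup a 0 + sup b 0 \<in> Ip (sc_add x y)" using A(2) A_sub_Icl by simp
      then show "s \<in> Ip (sc_add x y)" using CL_down[OF CA _ sup_le_sum_pos[of a b]] s(1) by simp
    qed
    then show ?thesis using Icl_sub[OF neS CA] S(3) by simp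
  qed
  note S2 = sc_scale_pos[OF S(2), of 2]
  have AS: "Ip (sc_add x y) \<subseteq> (\<lambda>w. (2::real) *\<^sub>R w) ` Ip (sc_sup x y)"
  proof -
    have C2: "CL ((\<lambda>w. (2::real) *\<^sub>R w) ` Ip (sc_sup x y))" using Ip_CL[OF S2(1)] S2(2) by simp
    have "sumset (Ip x) (Ip y) \<subseteq> (\<lambda>w. (2::real) *\<^sub>R w) ` Ip (sc_sup x y)"
    proof
      fix s assume "s \<in> sumset (Ip x) (Ip y)"
      then obtain a b where s: "s = a + b" "a \<in> Ip x" "b \<in> Ip y" by (auto simp: sumset_def)
      have "sup a b \<in> supS (Ip x) (Ip y)" using s unfolding supS_def by blast
      then have "sup a b \<in> Ip (sc_sup x y)" using S(3) A_sub_Icl by simp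
      then have "(2::real) *\<^sub>R sup a b \<in> (\<lambda>w. (2::real) *\<^sub>R w) ` Ip (sc_sup x y)" by blast
      then show "s \<in> (\<lambda>w. (2::real) *\<^sub>R w) ` Ip (sc_sup x y)" using CL_down[OF C2 _ two_sup[of a b]] s(1) by simp
    qed
    then show ?thesis using Icl_sub[OF neA C2] A(2) by simp
  qed
  have "BinfS (Ip (sc_sup x y)) \<subseteq> BinfS (Ip (sc_add x y))" by (rule BinfS_mono[OF SA])
  moreover have "BinfS (Ip (sc_add x y)) \<subseteq> BinfS ((\<lambda>w. (2::real) *\<^sub>R w) ` Ip (sc_sup x y))"
    by (rule BinfS_mono[OF AS])
  moreover have "BinfS ((\<lambda>w. (2::real) *\<^sub>R w) ` Ip (sc_sup x y)) = BinfS (Ip (sc_sup x y))"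
    by (rule BinfS_scale[OF CS]) simp
  ultimately show "BinfS (Ip (sc_add x y)) = BinfS (Ip (sc_sup x y))" by blast
qed

lemma add_infty_eq_sup:
  fixes B C :: "'a::{ordered_real_vector,conditionally_complete_lattice} set"
  assumes B: "is_band B" and C: "is_band C"
  shows "sc_add (infty B) (infty C) = sc_sup (infty B) (infty C)"
proof -
  note IB = infty_class[OF band_ideal[OF B]] and IC = infty_class[OF band_ideal[OF C]]
  note A = sc_add_Ip[OF IB(2) IC(2)] and S = sc_sup_Ip[OF IB(2) IC(2)]
  let ?Su = "sumset (Icl B) (Icl C)" and ?Sp = "supS (Icl B) (Icl C)"
  have "0 + 0 \<in> ?Su" using A_sub_Icl[OF ideal_zero[OF band_ideal[OF B]]] A_sub_Icl[OF ideal_zero[OF band_ideal[OF C]]]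
    unfolding sumset_def by blast
  then have neu: "?Su \<noteq> {}" by blast
  have "sup 0 0 \<in> ?Sp" using A_sub_Icl[OF ideal_zero[OF band_ideal[OF B]]] A_sub_Icl[OF ideal_zero[OF band_ideal[OF C]]]
    unfolding supS_def by blast
  then have nep: "?Sp \<noteq> {}" by blast
  have "Icl ?Su = Icl ?Sp"
  proof (rule antisym)
    have "?Su \<subseteq> Icl ?Sp"
    proof
      fix s assume "s \<in> ?Su"
      then obtain a b where s: "s = a + b" "a \<in> Icl B" "b \<in> Icl C" by (auto simp: sumset_def)
      have a2: "(2::real) *\<^sub>R sup a 0 \<in> Icl B"
        using A_sub_Icl[OF ideal_scale[OF band_ideal[OF B] band_Icl_pos[OF B s(2)]]] .
      have b2: "(2::real) *\<^sub>R sup b 0 \<in> Icl C"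
        using A_sub_Icl[OF ideal_scale[OF band_ideal[OF C] band_Icl_pos[OF C s(3)]]] .
      have "sup ((2::real) *\<^sub>R sup a 0) ((2::real) *\<^sub>R sup b 0) \<in> ?Sp"
        using a2 b2 unfolding supS_def by blast
      then have "sup ((2::real) *\<^sub>R sup a 0) ((2::real) *\<^sub>R sup b 0) \<in> Icl ?Sp" by (rule A_sub_Icl)
      moreover have "s \<le> sup ((2::real) *\<^sub>R sup a 0) ((2::real) *\<^sub>R sup b 0)"
      proof -
        have "s \<le> sup a 0 + sup b 0" unfolding s(1) by (intro add_mono) simp_all
        also have "\<dots> \<le> (2::real) *\<^sub>R sup (sup a 0) (sup b 0)" by (rule two_sup)
        also have "\<dots> = sup ((2::real) *\<^sub>R sup a 0) ((2::real) *\<^sub>R sup b 0)" by (rule scaleR_sup_pos) simp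
        finally show ?thesis .
      qed
      ultimately show "s \<in> Icl ?Sp" by (rule Icl_down[OF nep])
    qed
    then show "Icl ?Su \<subseteq> Icl ?Sp" by (rule Icl_sub[OF neu Icl_CL[OF nep]])
    have "?Sp \<subseteq> Icl ?Su"
    proof
      fix s assume "s \<in> ?Sp"
      then obtain a b where s: "s = sup a b" "a \<in> Icl B" "b \<in> Icl C" by (auto simp: supS_def)
      have "sup a 0 + sup b 0 \<in> ?Su"
        using A_sub_Icl[OF band_Icl_pos[OF B s(2)]] A_sub_Icl[OF band_Icl_pos[OF C s(3)]]
        unfolding sumset_def by blast
      then have "sup a 0 + sup b 0 \<in> Icl ?Su" by (rule A_sub_Icl)
      then show "s \<in> Icl ?Su" using Icl_down[OF neu _ sup_le_sum_pos[of a b]] s(1) by simp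
    qed
    then show "Icl ?Sp \<subseteq> Icl ?Su" by (rule Icl_sub[OF nep Icl_CL[OF neu]])
  qed
  then have "Ip (sc_add (infty B) (infty C)) = Ip (sc_sup (infty B) (infty C))"
    using A(2) S(3) IB(3) IC(3) by simp
  then show ?thesis using Xs_eq A(1) S(2) by blast
qed



lemma alpha_le:
  fixes r :: "'a::{ordered_real_vector,conditionally_complete_lattice}"
  assumes B: "is_band B" and K: "CL K" "0 \<in> K" and J: "J = Icl (sumset (Icl B) K)" "0 \<in> J"
    and r0: "0 \<le> r" and perp: "\<forall>b\<in>B. inf r (rabs b) = 0" and a: "a \<in> J"
  shows "inf (real n *\<^sub>R r) a \<le> phi K (real n *\<^sub>R r)"
proof -
  let ?w = "real n *\<^sub>R r"
  have w0: "0 \<le> ?w" using r0 by (simp add: scaleR_nonneg_nonneg)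
  have neJ: "J \<noteq> {}" using J(2) by blast
  have neK: "K \<noteq> {}" using K(2) by blast
  have "0 + 0 \<in> sumset (Icl B) K"
    using A_sub_Icl[OF ideal_zero[OF band_ideal[OF B]]] K(2) unfolding sumset_def by blast
  then have "sumset (Icl B) K \<noteq> {}" by blast
  then have CJ: "CL J" using J(1) Icl_CL by simp
  let ?al = "phi J ?w"
  have alJ: "?al \<in> J" using phi_in[OF neJ] CL_Icl[OF CJ] by simp
  have al0: "0 \<le> ?al" by (rule phi_nonneg[OF J(2) w0])
  have alw: "?al \<le> ?w" by (rule phi_le[OF neJ])
  have alperp: "\<forall>b\<in>B. inf ?al (rabs b) = 0"
  proof
    fix b assume b: "b \<in> B"
    have "inf ?w (rabs b) = 0" using disj_mult[OF r0 rabs_nonneg] perp b by blast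
    moreover have "inf ?al (rabs b) \<le> inf ?w (rabs b)" using alw by (simp add: le_infI1)
    moreover have "0 \<le> inf ?al (rabs b)" using al0 rabs_nonneg[of b] by simp
    ultimately show "inf ?al (rabs b) = 0" by simp
  qed
  have "?al \<in> K" using perp_in[OF B K al0 alperp] alJ J(1) by simp
  then have "?al \<in> Icl K" using CL_Icl[OF K(1)] by simp
  then have "?al \<le> phi K ?w" using phi_max[OF neK _ alw] by blast
  moreover have "inf ?w a \<le> ?al" by (rule phi_ge[OF a])
  ultimately show ?thesis by simp
qed

lemma part_sup_main:
  fixes x y :: "'a::{ordered_real_vector,conditionally_complete_lattice} set set"
  assumes x: "x \<in> Xs_pos" and y: "y \<in> Xs_pos"
  shows "infty (BinfS (Ip (sc_sup x y))) = sc_sup (infty (BinfS (Ip x))) (infty (BinfS (Ip y)))"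
proof -
  note X = Xs_pos_facts[OF x] and Y = Xs_pos_facts[OF y]
  note SF = sup_facts[OF x y]
  note S = sc_sup_Ip[OF X(1) Y(1)]
  note Z = Xs_pos_facts[OF SF(1)]
  note R = sc_sup_Ip[OF X(4) Y(4)]
  let ?Bx = "BinfS (Ip x)" and ?By = "BinfS (Ip y)" and ?BS = "BinfS (Ip (sc_sup x y))"
  let ?T = "supS (Icl ?Bx) (Icl ?By)"
  have "sup 0 0 \<in> ?T" using A_sub_Icl[OF ideal_zero[OF band_ideal[OF X(3)]]]
      A_sub_Icl[OF ideal_zero[OF band_ideal[OF Y(3)]]] unfolding supS_def by blast
  then have neT: "?T \<noteq> {}" by blast
  have neBS: "?BS \<noteq> {}" by (rule band_ne[OF Z(3)])
  have BxS: "?Bx \<subseteq> ?BS" by (rule BinfS_mono[OF SF(2)])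
  have ByS: "?By \<subseteq> ?BS" by (rule BinfS_mono[OF SF(3)])
  have "Icl ?T = Icl ?BS"
  proof (rule antisym)
    have "?T \<subseteq> Icl ?BS"
    proof
      fix s assume "s \<in> ?T"
      then obtain a b where s: "s = sup a b" "a \<in> Icl ?Bx" "b \<in> Icl ?By" by (auto simp: supS_def)
      have "sup a 0 \<in> ?BS" using band_Icl_pos[OF X(3) s(2)] BxS by blast
      moreover have "sup b 0 \<in> ?BS" using band_Icl_pos[OF Y(3) s(3)] ByS by blast
      ultimately have "sup a 0 + sup b 0 \<in> ?BS" by (rule ideal_add[OF band_ideal[OF Z(3)]])
      then have "sup a 0 + sup b 0 \<in> Icl ?BS" by (rule A_sub_Icl)
      then show "s \<in> Icl ?BS" using Icl_down[OF neBS _ sup_le_sum_pos[of a b]] s(1) by simp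
    qed
    then show "Icl ?T \<subseteq> Icl ?BS" by (rule Icl_sub[OF neT Icl_CL[OF neBS]])
    have "?BS \<subseteq> Icl ?T"
    proof
      fix z assume z: "z \<in> ?BS"
      let ?x = "rabs z"
      obtain P where P: "P \<in> ?Bx" "0 \<le> P" "P \<le> ?x" "\<forall>b\<in>?Bx. inf (?x - P) (rabs b) = 0"
        using band_proj[OF X(3) rabs_nonneg] by blast
      obtain Q where Q: "Q \<in> ?By" "0 \<le> Q" "Q \<le> ?x" "\<forall>b\<in>?By. inf (?x - Q) (rabs b) = 0"
        using band_proj[OF Y(3) rabs_nonneg] by blast
      let ?r = "?x - sup P Q"
      have r0: "0 \<le> ?r" using P(3) Q(3) by simp
      have rx: "?r \<le> ?x" using P(2) Q(2) by (simp add: le_supI1)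
      have perpx: "\<forall>b\<in>?Bx. inf ?r (rabs b) = 0"
      proof
        fix b assume b: "b \<in> ?Bx"
        have "?r \<le> ?x - P" by (simp add: diff_left_mono)
        then have "inf ?r (rabs b) \<le> inf (?x - P) (rabs b)" by (simp add: le_infI1)
        then show "inf ?r (rabs b) = 0" using P(4) b r0 rabs_nonneg[of b] by (simp add: antisym)
      qed
      have perpy: "\<forall>b\<in>?By. inf ?r (rabs b) = 0"
      proof
        fix b assume b: "b \<in> ?By"
        have "?r \<le> ?x - Q" by (simp add: diff_left_mono)
        then have "inf ?r (rabs b) \<le> inf (?x - Q) (rabs b)" by (simp add: le_infI1)
        then show "inf ?r (rabs b) = 0" using Q(4) b r0 rabs_nonneg[of b] by (simp add: antisym)
      qed
      obtain ux where ux: "ux \<in> Xu_pos" "x = sc_add (infty ?Bx) ux"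
        using decomp_exists[OF X(1) X(2)] by blast
      obtain uy where uy: "uy \<in> Xu_pos" "y = sc_add (infty ?By) uy"
        using decomp_exists[OF Y(1) Y(2)] by blast
      have uxp: "ux \<in> Xs" "0 \<in> Ip ux" "\<And>z. 0 \<le> z \<Longrightarrow> (\<And>n::nat. real n *\<^sub>R z \<in> Ip ux) \<Longrightarrow> z = 0"
        using ux(1) Xu_pos_iff by blast+
      have uyp: "uy \<in> Xs" "0 \<in> Ip uy" "\<And>z. 0 \<le> z \<Longrightarrow> (\<And>n::nat. real n *\<^sub>R z \<in> Ip uy) \<Longrightarrow> z = 0"
        using uy(1) Xu_pos_iff by blast+
      have Jx: "Ip x = Icl (sumset (Icl ?Bx) (Ip ux))"
        using Ip_sc_add_infty(2)[OF X(3) uxp(1)] ux(2) by simp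
      have Jy: "Ip y = Icl (sumset (Icl ?By) (Ip uy))"
        using Ip_sc_add_infty(2)[OF Y(3) uyp(1)] uy(2) by simp
      have H: "real n *\<^sub>R ?r \<le> sup (phi (Ip ux) (real n *\<^sub>R ?r)) (phi (Ip uy) (real n *\<^sub>R ?r))" for n :: nat
      proof -
        let ?w = "real n *\<^sub>R ?r"
        have "?w \<le> real n *\<^sub>R ?x" using rx by (intro scaleR_left_mono) auto
        moreover have "real n *\<^sub>R ?x \<in> Ip (sc_sup x y)" using z by (simp add: BinfS_def)
        ultimately have "?w \<in> Ip (sc_sup x y)" using CL_down[OF Ip_CL[OF S(2)]] by blast
        then have wI: "?w \<in> Icl (supS (Ip x) (Ip y))" using S(3) by simp
        have neS: "supS (Ip x) (Ip y) \<noteq> {}" using X(2) Y(2) unfolding supS_def by blast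
        have "?w = (SUP s\<in>supS (Ip x) (Ip y). inf ?w s)" using wI by (simp add: Icl_def phi_def)
        also have "\<dots> \<le> sup (phi (Ip ux) ?w) (phi (Ip uy) ?w)"
        proof (rule cSUP_least[OF neS])
          fix s assume "s \<in> supS (Ip x) (Ip y)"
          then obtain a b where s: "s = sup a b" "a \<in> Ip x" "b \<in> Ip y" by (auto simp: supS_def)
          have "inf ?w s = sup (inf ?w a) (inf ?w b)" using s(1) by (simp add: inf_sup_fin)
          also have "\<dots> \<le> sup (phi (Ip ux) ?w) (phi (Ip uy) ?w)"
            using alpha_le[OF X(3) Ip_CL[OF uxp(1)] uxp(2) Jx X(2) r0 perpx s(2), of n]
              alpha_le[OF Y(3) Ip_CL[OF uyp(1)] uyp(2) Jy Y(2) r0 perpy s(3), of n]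
            by (rule sup_mono)
          finally show "inf ?w s \<le> sup (phi (Ip ux) ?w) (phi (Ip uy) ?w)" .
        qed
        finally show ?thesis .
      qed
      have "?r = 0"
        by (rule arch_lemma[OF Ip_CL[OF uxp(1)] uxp(2) uxp(3) Ip_CL[OF uyp(1)] uyp(2) uyp(3) r0 H]) auto
      then have xe: "?x = sup P Q" by simp
      have "sup P Q \<in> ?T" using A_sub_Icl[OF P(1)] A_sub_Icl[OF Q(1)] unfolding supS_def by blast
      then have "?x \<in> Icl ?T" using xe A_sub_Icl by simp
      then show "z \<in> Icl ?T" by (rule Icl_down[OF neT]) (rule rabs_ge1)
    qed
    then show "Icl ?BS \<subseteq> Icl ?T" by (rule Icl_sub[OF neBS Icl_CL[OF neT]])
  qed
  then have "Ip (infty ?BS) = Ip (sc_sup (infty ?Bx) (infty ?By))" using Z(5) R(3) X(5) Y(5) by simp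
  then show ?thesis using Xs_eq Z(4) R(2) by blast
qed

theorem propositionS16:
  fixes x y :: "'a::{ordered_real_vector, conditionally_complete_lattice} set set"
    and c :: real
  assumes "x \<in> Xs_pos" and "y \<in> Xs_pos" and "0 \<le> c"
  shows "inf_part (sc_add x y) = sc_add (inf_part x) (inf_part y)
       \<and> inf_part (sc_scale c x) = sc_scale c (inf_part x)
       \<and> (sc_le x y \<longrightarrow> sc_le (inf_part x) (inf_part y))
       \<and> inf_part (sc_sup x y) = sc_sup (inf_part x) (inf_part y)
       \<and> inf_part (sc_inf x y) = sc_inf (inf_part x) (inf_part y)"
proof -
  note X = Xs_pos_facts[OF assms(1)] and Y = Xs_pos_facts[OF assms(2)]
  note SF = sup_facts[OF assms(1,2)]
  note BA = binf_add_eq_sup[OF assms(1,2)]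
  have sup: "inf_part (sc_sup x y) = sc_sup (inf_part x) (inf_part y)"
    using Xs_pos_facts(6)[OF SF(1)] part_sup_main[OF assms(1,2)] X(6) Y(6) by simp
  have add: "inf_part (sc_add x y) = sc_add (inf_part x) (inf_part y)"
  proof -
    have "inf_part (sc_add x y) = infty (BinfS (Ip (sc_sup x y)))"
      using Xs_pos_facts(6)[OF BA(1)] BA(2) by simp
    also have "\<dots> = sc_sup (inf_part x) (inf_part y)"
      using part_sup_main[OF assms(1,2)] X(6) Y(6) by simp
    also have "\<dots> = sc_add (inf_part x) (inf_part y)"
      using add_infty_eq_sup[OF X(3) Y(3)] X(6) Y(6) by simp
    finally show ?thesis .
  qed
  show ?thesis
    using add sup part_scale[OF assms(1,3)] part_mono[OF assms(1,2)] part_inf[OF assms(1,2)] by blast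
qed



end
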